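(* Let $W_T=S_{N+1}$ with simple reflections $s_1,\dots,s_N$, $T=\{1,\dots,N\}$, $I=\{1,\dots,N-1\}$, and let $X=\{m+1,\dots,N\}$ be a suffix of $T$ ($0\le m\le N$; $X=\emptyset$ when $m=N$), with $h_X=s_Ns_{N-1}\cdots s_{m+1}$. (a) If $X\neq\emptyset$ and $m\ge1$ (so $s_m$ "grows" the suffix), then $b_{w_Ih_X}b_{s_m}=b_{w_Ih_{X\cup\{m\}}}+b_{w_Ih_{X\setminus\{m+1\}}}$. (b) If $X=\emptyset$, then $b_{w_I}b_{s_N}=b_{w_Is_N}$. (c) In all other cases, i.e. for $j\in T$ with $j\neq m$ when $X\ne\emptyset$ and $j\neq N$ when $X=\emptyset$, $b_{w_Ih_X}b_{s_j}=(v+v^{-1})b_{w_Ih_X}$. In particular, $w_Ih_X$ is smooth whenever $X$ is a suffix of $T$.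
   Context: $w_I$ is the longest element of the parabolic subgroup generated by $s_1,\dots,s_{N-1}$; for a suffix $Y=\{a,\dots,N\}$, $h_Y=s_Ns_{N-1}\cdots s_a$ (and $h_\emptyset=1$). $\mathbf H$ is the Hecke algebra of $S_{N+1}$ over $\mathbb Z[v,v^{-1}]$ with standard basis $H_y$ and Kazhdan–Lusztig basis $b_y$ ($b_s=H_s+v$). An element $w$ is smooth if $b_w=\sum_{y\le w}v^{\ell(w)-\ell(y)}H_y$. *)

theory Defs
  imports "HOL-Computational_Algebra.Formal_Laurent_Series" "HOL-Combinatorics.Permutations"
begin

(* Weyl group W_T = S_(N+1): permutations of {1..N+1}; product x y := x \<circ> y.
   Simple reflection s_i (1 \<le> i \<le> N) swaps i and i+1. *)
type_synonym perm = "nat \<Rightarrow> nat"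

definition Wgrp :: "nat \<Rightarrow> perm set" where
  "Wgrp N = {w. w permutes {1..Suc N}}"

definition sref :: "nat \<Rightarrow> perm" where
  "sref i = Transposition.transpose i (Suc i)"

definition len :: "nat \<Rightarrow> perm \<Rightarrow> nat" where
  "len N w = card {(i, j). 1 \<le> i \<and> i < j \<and> j \<le> Suc N \<and> w j < w i}"

definition wordprod :: "nat list \<Rightarrow> perm" where
  "wordprod is = foldr (\<circ>) (map sref is) id"

definition rword :: "nat \<Rightarrow> perm \<Rightarrow> nat list" where
  "rword N y = (SOME is. set is \<subseteq> {1..N} \<and> wordprod is = y \<and> length is = len N y)"

definition bruhat_le :: "nat \<Rightarrow> perm \<Rightarrow> perm \<Rightarrow> bool" where
  "bruhat_le N x w \<longleftrightarrow> x \<in> Wgrp N \<and>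
     (x, w) \<in> {(y, y \<circ> Transposition.transpose i j) | y i j.
                 y \<in> Wgrp N \<and> 1 \<le> i \<and> i < j \<and> j \<le> Suc N \<and>
                 len N y < len N (y \<circ> Transposition.transpose i j)}\<^sup>*"

definition parab :: "nat \<Rightarrow> perm set" where
  "parab N = {wordprod is | is. set is \<subseteq> {1..N-1}}"

definition wI :: "nat \<Rightarrow> perm" where
  "wI N = (THE w. w \<in> parab N \<and> (\<forall>u\<in>parab N. len N u \<le> len N w))"

(* h_X for the suffix X = {m+1..N}: s_N s_(N-1) ... s_(m+1) *)
definition hsuf :: "nat \<Rightarrow> nat \<Rightarrow> perm" where
  "hsuf N m = wordprod (rev [Suc m..<Suc N])"

(* Laurent polynomials Z[v,v^-1] inside integer formal Laurent series; v = fls_X *)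
definition lpoly :: "int fls \<Rightarrow> bool" where
  "lpoly p \<longleftrightarrow> finite {n. fls_nth p n \<noteq> 0}"

definition vZv :: "int fls \<Rightarrow> bool" where
  "vZv p \<longleftrightarrow> lpoly p \<and> (\<forall>n\<le>0. fls_nth p n = 0)"

definition lbar :: "int fls \<Rightarrow> int fls" where
  "lbar p = Abs_fls (\<lambda>n. if lpoly p then fls_nth p (- n) else 0)"

(* Hecke algebra elements: coefficient functions  \<Sum>_x h(x) H_x  (supported on Wgrp N) *)
type_synonym hecke = "perm \<Rightarrow> int fls"

definition Hstd :: "perm \<Rightarrow> hecke" where
  "Hstd y = (\<lambda>x. if x = y then 1 else 0)"

definition hadd :: "hecke \<Rightarrow> hecke \<Rightarrow> hecke" where
  "hadd f g = (\<lambda>x. f x + g x)"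

definition hscale :: "int fls \<Rightarrow> hecke \<Rightarrow> hecke" where
  "hscale p f = (\<lambda>x. p * f x)"

(* right multiplication by H_(s_i):  H_x H_s = H_(xs) if xs > x,
   H_x H_s = H_(xs) + (v^-1 - v) H_x if xs < x *)
definition mult_Hs :: "nat \<Rightarrow> hecke \<Rightarrow> nat \<Rightarrow> hecke" where
  "mult_Hs N h i = (\<lambda>z. h (z \<circ> sref i) +
      (if len N (z \<circ> sref i) < len N z then (fls_X_inv - fls_X) * h z else 0))"

definition mult_H :: "nat \<Rightarrow> hecke \<Rightarrow> perm \<Rightarrow> hecke" where
  "mult_H N h y = fold (\<lambda>i g. mult_Hs N g i) (rword N y) h"

definition hmult :: "nat \<Rightarrow> hecke \<Rightarrow> hecke \<Rightarrow> hecke" where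
  "hmult N h g = (\<lambda>z. \<Sum>y\<in>Wgrp N. mult_H N (hscale (g y) h) y z)"

(* bar(H_x) = H_(s_i1)^-1 ... H_(s_ik)^-1 with H_s^-1 = H_s + (v - v^-1) *)
definition barH :: "nat \<Rightarrow> perm \<Rightarrow> hecke" where
  "barH N x = fold (\<lambda>i g. hadd (mult_Hs N g i) (hscale (fls_X - fls_X_inv) g))
                   (rword N x) (Hstd id)"

definition hbar :: "nat \<Rightarrow> hecke \<Rightarrow> hecke" where
  "hbar N h = (\<lambda>z. \<Sum>x\<in>Wgrp N. lbar (h x) * barH N x z)"

definition kl :: "nat \<Rightarrow> perm \<Rightarrow> hecke" where
  "kl N w = (THE b. (\<forall>x. x \<notin> Wgrp N \<longrightarrow> b x = 0) \<and> (\<forall>x. lpoly (b x)) \<and>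
                    hbar N b = b \<and> b w = 1 \<and> (\<forall>x. x \<noteq> w \<longrightarrow> vZv (b x)))"

definition smooth :: "nat \<Rightarrow> perm \<Rightarrow> bool" where
  "smooth N w \<longleftrightarrow>
     kl N w = (\<lambda>y. if bruhat_le N y w then fls_X ^ (len N w - len N y) else 0)"

end

theory Submission
  imports Defs
begin

definition Inv :: "nat \<Rightarrow> perm \<Rightarrow> (nat \<times> nat) set" where
  "Inv N y = {(i, j). 1 \<le> i \<and> i < j \<and> j \<le> Suc N \<and> y j < y i}"

lemma len_Inv: "len N y = card (Inv N y)"
  by (simp add: len_def Inv_def)

lemma fin_Inv: "finite (Inv N y)"
proof -
  have "Inv N y \<subseteq> {1..Suc N} \<times> {1..Suc N}" by (auto simp: Inv_def)
  then show ?thesis by (rule finite_subset) auto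
qed

lemma sref_apply: "sref i a = (if a = i then Suc i else if a = Suc i then i else a)"
  by (simp add: sref_def Transposition.transpose_def)

lemma sref_sref[simp]: "sref i (sref i a) = a"
  by (simp add: sref_apply)

lemma sref_comp_sref[simp]: "y \<circ> sref i \<circ> sref i = y"
  by (rule ext) (simp add: sref_apply)

lemma sref_mono_pair:
  assumes "a < b" "(a, b) \<noteq> (i, Suc i)"
  shows "sref i a < sref i b"
  using assms by (auto simp: sref_apply)

lemma len_adj_up:
  assumes "1 \<le> i" "i \<le> N" "y i < y (Suc i)"
  shows "len N (y \<circ> sref i) = Suc (len N y)"
proof -
  let ?s = "sref i"
  let ?t = "\<lambda>(a, b). (?s a, ?s b)"
  have eq: "Inv N (y \<circ> ?s) = insert (i, Suc i) (?t ` Inv N y)"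
  proof
    show "Inv N (y \<circ> ?s) \<subseteq> insert (i, Suc i) (?t ` Inv N y)"
    proof
      fix p assume p: "p \<in> Inv N (y \<circ> ?s)"
      obtain a b where ab: "p = (a, b)" by (cases p)
      show "p \<in> insert (i, Suc i) (?t ` Inv N y)"
      proof (cases "(a, b) = (i, Suc i)")
        case True then show ?thesis using ab by simp
      next
        case False
        have "(?s a, ?s b) \<in> Inv N y"
          using p ab False assms sref_mono_pair[of a b i] by (auto simp: Inv_def sref_apply split: if_splits)
        moreover have "p = ?t (?s a, ?s b)" using ab by simp
        ultimately show ?thesis by blast
      qed
    qed
  next
    show "insert (i, Suc i) (?t ` Inv N y) \<subseteq> Inv N (y \<circ> ?s)"
    proof
      fix p assume p: "p \<in> insert (i, Suc i) (?t ` Inv N y)"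
      show "p \<in> Inv N (y \<circ> ?s)"
      proof (cases "p = (i, Suc i)")
        case True then show ?thesis using assms by (auto simp: Inv_def sref_apply)
      next
        case False
        then obtain a b where ab: "(a, b) \<in> Inv N y" "p = (?s a, ?s b)" using p by auto
        have ne: "(a, b) \<noteq> (i, Suc i)" using ab assms by (auto simp: Inv_def)
        show ?thesis using ab ne assms sref_mono_pair[of a b i] by (auto simp: Inv_def sref_apply split: if_splits)
      qed
    qed
  qed
  have inj: "inj_on ?t (Inv N y)"
    by (rule inj_onI) (auto simp: sref_apply split: if_splits)
  have notin: "(i, Suc i) \<notin> ?t ` Inv N y"
    using assms by (auto simp: Inv_def sref_apply split: if_splits)
  show ?thesis
    unfolding len_Inv eq using fin_Inv[of N y] inj notin
    by (simp add: card_image)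
qed

lemma len_adj_cases:
  assumes "1 \<le> i" "i \<le> N"
  shows "(y i < y (Suc i) \<and> len N (y \<circ> sref i) = Suc (len N y)) \<or>
         (y (Suc i) < y i \<and> len N y = Suc (len N (y \<circ> sref i))) \<or>
         (y i = y (Suc i) \<and> y \<circ> sref i = y)"
proof (cases "y i < y (Suc i)")
  case True then show ?thesis using len_adj_up[OF assms] by blast
next
  case False
  show ?thesis
  proof (cases "y (Suc i) < y i")
    case True
    have lt: "(y \<circ> sref i) i < (y \<circ> sref i) (Suc i)" using True by (simp add: sref_apply)
    have "len N (y \<circ> sref i \<circ> sref i) = Suc (len N (y \<circ> sref i))"
      by (rule len_adj_up[OF assms lt])
    then have "len N y = Suc (len N (y \<circ> sref i))" by simp
    then show ?thesis using True by blast
  next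
    case False2: False
    then have "y i = y (Suc i)" using False by simp
    moreover have "y \<circ> sref i = y"
      using \<open>y i = y (Suc i)\<close> by (auto simp: fun_eq_iff sref_apply)
    ultimately show ?thesis by blast
  qed
qed

lemma len_adj_le1: "1 \<le> i \<Longrightarrow> i \<le> N \<Longrightarrow> len N (y \<circ> sref i) \<le> Suc (len N y)"
  using len_adj_cases[of i N y] by auto

lemma len_adj_le2: "1 \<le> i \<Longrightarrow> i \<le> N \<Longrightarrow> len N y \<le> Suc (len N (y \<circ> sref i))"
  using len_adj_cases[of i N y] by auto

lemma len_transp_up:
  assumes "1 \<le> i" "i < j" "j \<le> Suc N" "y i < y j"
  shows "len N y < len N (y \<circ> Transposition.transpose i j)"
proof -
  let ?t = "Transposition.transpose i j"
  let ?y = "y \<circ> ?t"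
  define sg where "sg = (\<lambda>(a, b). if a < i \<or> j < b then (?t a, ?t b) else (a::nat, b::nat))"
  have tt: "\<And>a. ?t a = (if a = i then j else if a = j then i else a)"
    by (simp add: Transposition.transpose_def)
  have sub: "sg ` Inv N y \<subseteq> Inv N ?y - {(i, j)}"
  proof
    fix q assume "q \<in> sg ` Inv N y"
    then obtain a b where ab: "(a, b) \<in> Inv N y" "q = sg (a, b)" by auto
    from ab(1) have a1: "1 \<le> a" "a < b" "b \<le> Suc N" "y b < y a" by (auto simp: Inv_def)
    show "q \<in> Inv N ?y - {(i, j)}"
    proof (cases "a < i \<or> j < b")
      case True
      then have q: "q = (?t a, ?t b)" using ab by (simp add: sg_def)
      show ?thesis using True a1 assms unfolding q Inv_def by (auto simp: tt)
    next
      case False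
      then have q: "q = (a, b)" using ab by (simp add: sg_def)
      have "(a, b) \<noteq> (i, j)" using a1 assms by auto
      moreover have "(a, b) \<in> Inv N ?y"
        using False a1 assms by (auto simp: Inv_def tt)
      ultimately show ?thesis using q by simp
    qed
  qed
  have inj: "inj_on sg (Inv N y)"
  proof (rule inj_onI)
    fix p q assume p: "p \<in> Inv N y" and q: "q \<in> Inv N y" and e: "sg p = sg q"
    obtain a b where pab: "p = (a, b)" by (cases p)
    obtain c d where qcd: "q = (c, d)" by (cases q)
    show "p = q" using e p q assms unfolding pab qcd sg_def Inv_def
      by (auto simp: tt split: if_splits)
  qed
  have "(i, j) \<in> Inv N ?y" using assms by (auto simp: Inv_def)
  then have "card (Inv N ?y - {(i, j)}) < card (Inv N ?y)"
    using fin_Inv by (meson card_Diff1_less)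
  moreover have "card (Inv N y) \<le> card (Inv N ?y - {(i, j)})"
    using card_inj_on_le[OF inj sub] fin_Inv by simp
  ultimately show ?thesis by (simp add: len_Inv)
qed

lemma len_transp_down:
  assumes "1 \<le> i" "i < j" "j \<le> Suc N" "y j < y i"
  shows "len N (y \<circ> Transposition.transpose i j) < len N y"
proof -
  let ?y = "y \<circ> Transposition.transpose i j"
  have "?y i < ?y j" using assms by simp
  from len_transp_up[OF assms(1-3) this] show ?thesis
    by (metis comp_assoc comp_id transpose_comp_involutory)
qed

lemma W_perm: "x \<in> Wgrp N \<Longrightarrow> x permutes {1..Suc N}"
  by (simp add: Wgrp_def)

lemma W_inj: "x \<in> Wgrp N \<Longrightarrow> inj x"
  by (simp add: Wgrp_def permutes_inj)

lemma W_range: "x \<in> Wgrp N \<Longrightarrow> a \<in> {1..Suc N} \<Longrightarrow> x a \<in> {1..Suc N}"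
  by (metis Wgrp_def mem_Collect_eq permutes_in_image)

lemma W_out: "x \<in> Wgrp N \<Longrightarrow> a \<notin> {1..Suc N} \<Longrightarrow> x a = a"
  by (simp add: Wgrp_def permutes_not_in)

lemma W_surj: "x \<in> Wgrp N \<Longrightarrow> b \<in> {1..Suc N} \<Longrightarrow> \<exists>a\<in>{1..Suc N}. x a = b"
  by (metis Wgrp_def mem_Collect_eq permutes_image image_iff)

lemma sref_W: "1 \<le> i \<Longrightarrow> i \<le> N \<Longrightarrow> sref i \<in> Wgrp N"
  unfolding Wgrp_def sref_def by (auto intro!: permutes_swap_id)

lemma W_comp: "x \<in> Wgrp N \<Longrightarrow> y \<in> Wgrp N \<Longrightarrow> x \<circ> y \<in> Wgrp N"
  unfolding Wgrp_def by (auto intro: permutes_compose)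

lemma W_comp_sref_iff: "1 \<le> i \<Longrightarrow> i \<le> N \<Longrightarrow> (x \<circ> sref i \<in> Wgrp N) = (x \<in> Wgrp N)"
  by (metis W_comp sref_W sref_comp_sref)

lemma W_id: "id \<in> Wgrp N"
  by (simp add: Wgrp_def permutes_id)

lemma len_left_up:
  assumes x: "x \<in> Wgrp N" and j: "1 \<le> j" "j \<le> N"
    and p: "x p = j" and q: "x q = Suc j" and pq: "p < q"
  shows "len N (sref j \<circ> x) = Suc (len N x)"
proof -
  have pS: "p \<in> {1..Suc N}" using W_out[OF x, of p] p j by force
  have qS: "q \<in> {1..Suc N}" using W_out[OF x, of q] q j by force
  have injx: "inj x" using W_inj[OF x] .
  have eq: "Inv N (sref j \<circ> x) = insert (p, q) (Inv N x)"
  proof (rule set_eqI)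
    fix r :: "nat \<times> nat"
    obtain a b where r: "r = (a, b)" by (cases r)
    show "r \<in> Inv N (sref j \<circ> x) \<longleftrightarrow> r \<in> insert (p, q) (Inv N x)"
    proof (cases "(a, b) = (p, q)")
      case True then show ?thesis using r pS qS pq p q by (auto simp: Inv_def sref_apply)
    next
      case False
      have "\<not> (x a = j \<and> x b = Suc j)" using False p q injx by (metis injD prod.inject)
      moreover have "\<not> (x a = Suc j \<and> x b = j) \<or> \<not> a < b"
      proof -
        have ha: "x a = Suc j \<Longrightarrow> a = q" using q injx by (metis injD)
        have hb: "x b = j \<Longrightarrow> b = p" using p injx by (metis injD)
        show ?thesis using pq ha hb by auto
      qed
      ultimately show ?thesis using r False
        by (auto simp: Inv_def sref_apply)
    qed
  qed
  have "(p, q) \<notin> Inv N x" using p q by (auto simp: Inv_def)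
  then show ?thesis unfolding len_Inv eq using fin_Inv by simp
qed

lemma len_inv_le:
  assumes x: "x \<in> Wgrp N" and xx: "x' \<circ> x = id"
  shows "len N x \<le> len N x'"
proof -
  let ?f = "\<lambda>(a, b). (x b, x a)"
  have sub: "?f ` Inv N x \<subseteq> Inv N x'"
  proof
    fix r assume "r \<in> ?f ` Inv N x"
    then obtain a b where ab: "(a, b) \<in> Inv N x" "r = (x b, x a)" by auto
    have "x' (x a) = a" "x' (x b) = b" using xx by (metis comp_apply id_apply)+
    moreover have "x a \<in> {1..Suc N}" "x b \<in> {1..Suc N}" using ab W_range[OF x] by (auto simp: Inv_def)
    ultimately show "r \<in> Inv N x'" using ab by (auto simp: Inv_def)
  qed
  have "inj_on ?f (Inv N x)"
    using W_inj[OF x] by (auto simp: inj_on_def dest: injD)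
  then show ?thesis using card_inj_on_le[OF _ sub] fin_Inv by (simp add: len_Inv)
qed

lemma wordprod_Nil[simp]: "wordprod [] = id"
  by (simp add: wordprod_def)

lemma wordprod_Cons[simp]: "wordprod (i # is) = sref i \<circ> wordprod is"
  by (simp add: wordprod_def)

lemma wordprod_snoc[simp]: "wordprod (is @ [i]) = wordprod is \<circ> sref i"
  by (induction "is") (auto simp: wordprod_def comp_assoc)

lemma len_id[simp]: "len N id = 0"
proof -
  have "Inv N id = {}" by (auto simp: Inv_def)
  then show ?thesis by (metis card.empty len_Inv)
qed

lemma len_id'[simp]: "len N (\<lambda>a. a) = 0"
  using len_id[of N] by (simp add: id_def)

lemma wordprod_W: "set is \<subseteq> {1..N} \<Longrightarrow> wordprod is \<in> Wgrp N"
  by (induction "is") (auto simp: W_id intro!: W_comp sref_W)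

lemma len_wordprod_le: "set is \<subseteq> {1..N} \<Longrightarrow> len N (wordprod is) \<le> length is"
proof (induction "is" rule: rev_induct)
  case Nil
  then show ?case by simp
next
  case (snoc i "is")
  have s: "set is \<subseteq> {1..N}" "1 \<le> i" "i \<le> N" using snoc.prems by auto
  have "len N (wordprod (is @ [i])) \<le> Suc (len N (wordprod is))"
    using len_adj_le1[OF s(2,3)] by (simp only: wordprod_snoc)
  then show ?case using snoc.IH[OF s(1)] by (simp add: o_def)
qed


lemma len0_id:
  assumes x: "x \<in> Wgrp N" and l: "len N x = 0"
  shows "x = id"
proof -
  have inv: "Inv N x = {}" using l fin_Inv by (simp add: len_Inv)
  have lmono: "\<And>a b. 1 \<le> a \<Longrightarrow> a < b \<Longrightarrow> b \<le> Suc N \<Longrightarrow> x a < x b"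
  proof -
    fix a b assume ab: "1 \<le> a" "a < b" "b \<le> Suc N"
    have "\<not> x b < x a" using inv ab by (auto simp: Inv_def)
    moreover have "x a \<noteq> x b" using W_inj[OF x] ab by (metis injD less_irrefl)
    ultimately show "x a < x b" by simp
  qed
  have ge: "\<And>a. 1 \<le> a \<Longrightarrow> a \<le> Suc N \<Longrightarrow> a \<le> x a"
  proof -
    fix a show "1 \<le> a \<Longrightarrow> a \<le> Suc N \<Longrightarrow> a \<le> x a"
    proof (induction a)
      case 0 then show ?case by simp
    next
      case (Suc a)
      show ?case
      proof (cases "a = 0")
        case True then show ?thesis using W_range[OF x, of 1] by simp
      next
        case False
        then have "a \<le> x a" using Suc by simp
        moreover have "x a < x (Suc a)" using lmono[of a "Suc a"] Suc False by simp
        ultimately show ?thesis by simp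
      qed
    qed
  qed
  have le: "\<And>d. d \<le> N \<Longrightarrow> x (Suc N - d) \<le> Suc N - d"
  proof -
    fix d show "d \<le> N \<Longrightarrow> x (Suc N - d) \<le> Suc N - d"
    proof (induction d)
      case 0 then show ?case using W_range[OF x, of "Suc N"] by simp
    next
      case (Suc d)
      then have "x (Suc N - d) \<le> Suc N - d" by simp
      moreover have "x (Suc N - Suc d) < x (Suc N - d)"
        using lmono[of "Suc N - Suc d" "Suc N - d"] Suc by simp
      ultimately show ?case using Suc by simp
    qed
  qed
  show ?thesis
  proof (rule ext)
    fix a
    show "x a = id a"
    proof (cases "a \<in> {1..Suc N}")
      case True
      have "Suc N - a \<le> N" using True by auto
      then have "x a \<le> a" using le[of "Suc N - a"] True by simp
      with ge[of a] True show ?thesis by simp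
    next
      case False then show ?thesis using W_out[OF x] by simp
    qed
  qed
qed

lemma red_exists:
  assumes "x \<in> Wgrp N"
  shows "\<exists>is. set is \<subseteq> {1..N} \<and> wordprod is = x \<and> length is = len N x"
  using assms
proof (induction "len N x" arbitrary: x)
  case 0
  then show ?case using len0_id[of x N] by (intro exI[of _ "[]"]) auto
next
  case (Suc n)
  have "x \<noteq> id" using Suc by auto
  then obtain i where i: "1 \<le> i" "i \<le> N" "\<not> x i < x (Suc i)"
  proof -
    have "\<not> (\<forall>i. 1 \<le> i \<and> i \<le> N \<longrightarrow> x i < x (Suc i))"
    proof
      assume h: "\<forall>i. 1 \<le> i \<and> i \<le> N \<longrightarrow> x i < x (Suc i)"
      have "len N x = 0"
      proof -
        have "\<And>a b. 1 \<le> a \<Longrightarrow> a < b \<Longrightarrow> b \<le> Suc N \<Longrightarrow> x a < x b"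
        proof -
          fix a b assume ab: "1 \<le> a" "a < b" "b \<le> Suc N"
          then show "x a < x b"
          proof (induction b)
            case 0 then show ?case by simp
          next
            case (Suc b)
            show ?case
            proof (cases "a = b")
              case True then show ?thesis using h Suc by auto
            next
              case False
              then have "x a < x b" using Suc by simp
              also have "x b < x (Suc b)" using h Suc False by auto
              finally show ?thesis .
            qed
          qed
        qed
        then have "Inv N x = {}" by (force simp: Inv_def)
        then show ?thesis by (simp add: len_Inv)
      qed
      then show False using Suc by simp
    qed
    then show ?thesis using that by blast
  qed
  have neq: "x i \<noteq> x (Suc i)" using W_inj[OF Suc.prems] by (metis injD n_not_Suc_n)
  have dec: "x (Suc i) < x i" using i neq by simp
  have "len N x = Suc (len N (x \<circ> sref i))"
    using len_adj_cases[OF i(1,2), of x] dec by auto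
  then have ln: "n = len N (x \<circ> sref i)" using Suc by simp
  have xW: "x \<circ> sref i \<in> Wgrp N" using Suc.prems i W_comp_sref_iff by blast
  obtain ws where ws: "set ws \<subseteq> {1..N}" "wordprod ws = x \<circ> sref i" "length ws = len N (x \<circ> sref i)"
    using Suc.hyps(1)[OF ln xW] by blast
  show ?case
    using ws i \<open>len N x = Suc (len N (x \<circ> sref i))\<close>
    by (intro exI[of _ "ws @ [i]"]) auto
qed

lemma rword_prop:
  assumes "x \<in> Wgrp N"
  shows "set (rword N x) \<subseteq> {1..N} \<and> wordprod (rword N x) = x \<and> length (rword N x) = len N x"
  unfolding rword_def by (rule someI_ex) (rule red_exists[OF assms])

definition red :: "nat \<Rightarrow> nat list \<Rightarrow> bool" where
  "red N is \<longleftrightarrow> set is \<subseteq> {1..N} \<and> length is = len N (wordprod is)"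

lemma red_rword: "x \<in> Wgrp N \<Longrightarrow> red N (rword N x)"
  using rword_prop[of x N] by (simp add: red_def)

lemma red_snoc:
  assumes "red N (is @ [i])"
  shows "red N is \<and> len N (wordprod is \<circ> sref i) = Suc (len N (wordprod is))"
proof -
  have s: "set is \<subseteq> {1..N}" "1 \<le> i" "i \<le> N" using assms by (auto simp: red_def)
  have "length is \<ge> len N (wordprod is)" using len_wordprod_le[OF s(1)] .
  moreover have "Suc (length is) = len N (wordprod is \<circ> sref i)" using assms by (simp add: red_def)
  moreover have "len N (wordprod is \<circ> sref i) \<le> Suc (len N (wordprod is))" using len_adj_le1 s by blast
  ultimately show ?thesis using s by (simp add: red_def)
qed

lemma len_left_cases:
  assumes x: "x \<in> Wgrp N" and j: "1 \<le> j" "j \<le> N"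
    and p: "x p = j" and q: "x q = Suc j"
  shows "(p < q \<and> len N (sref j \<circ> x) = Suc (len N x)) \<or>
         (q < p \<and> len N x = Suc (len N (sref j \<circ> x)))"
proof (cases "p < q")
  case True then show ?thesis using len_left_up[OF assms] by simp
next
  case False
  have "p \<noteq> q" using p q by auto
  then have qp: "q < p" using False by simp
  have x2: "sref j \<circ> x \<in> Wgrp N" using W_comp[OF sref_W[OF j] x] .
  have "(sref j \<circ> x) q = j" "(sref j \<circ> x) p = Suc j" using p q by (auto simp: sref_apply)
  from len_left_up[OF x2 j this qp] have "len N (sref j \<circ> (sref j \<circ> x)) = Suc (len N (sref j \<circ> x))" .
  moreover have "sref j \<circ> (sref j \<circ> x) = x" by (rule ext) simp
  ultimately show ?thesis using qp by simp
qed

lemma W_preimage: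
  assumes "x \<in> Wgrp N" "b \<in> {1..Suc N}"
  obtains a where "a \<in> {1..Suc N}" "x a = b"
  using W_surj[OF assms] by blast

lemma len_left_le1:
  assumes x: "x \<in> Wgrp N" and j: "1 \<le> j" "j \<le> N"
  shows "len N (sref j \<circ> x) \<le> Suc (len N x)"
proof -
  obtain p where "x p = j" using W_preimage[OF x, of j] j by auto
  moreover obtain q where "x q = Suc j" using W_preimage[OF x, of "Suc j"] j by auto
  ultimately show ?thesis using len_left_cases[OF x j] by fastforce
qed

lemma red_Cons:
  assumes "red N (i # is)"
  shows "red N is \<and> len N (sref i \<circ> wordprod is) = Suc (len N (wordprod is))"
proof -
  have s: "set is \<subseteq> {1..N}" "1 \<le> i" "i \<le> N" using assms by (auto simp: red_def)
  have "length is \<ge> len N (wordprod is)" using len_wordprod_le[OF s(1)] .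
  moreover have "Suc (length is) = len N (sref i \<circ> wordprod is)" using assms by (simp add: red_def)
  moreover have "len N (sref i \<circ> wordprod is) \<le> Suc (len N (wordprod is))"
    using len_left_le1[OF wordprod_W[OF s(1)] s(2,3)] .
  ultimately show ?thesis using s by (simp add: red_def)
qed

lemma wordprod_rev1: "wordprod (rev is) \<circ> wordprod is = id"
  by (induction "is") (auto simp: comp_assoc fun_eq_iff)

lemma wordprod_rev2: "wordprod is \<circ> wordprod (rev is) = id"
  using wordprod_rev1[of "rev is"] by simp

lemma red_rev:
  assumes "red N is"
  shows "red N (rev is)"
proof -
  have s: "set is \<subseteq> {1..N}" using assms by (simp add: red_def)
  have "len N (wordprod is) \<le> len N (wordprod (rev is))"
    by (rule len_inv_le[OF wordprod_W[OF s] wordprod_rev1])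
  moreover have "len N (wordprod (rev is)) \<le> len N (wordprod is)"
    by (rule len_inv_le[OF wordprod_W wordprod_rev2]) (use s in auto)
  ultimately show ?thesis using assms by (simp add: red_def)
qed

definition Rop :: "nat \<Rightarrow> nat \<Rightarrow> hecke \<Rightarrow> hecke" where
  "Rop N i h = mult_Hs N h i"

definition R'op :: "nat \<Rightarrow> nat \<Rightarrow> hecke \<Rightarrow> hecke" where
  "R'op N i h = hadd (mult_Hs N h i) (hscale (fls_X - fls_X_inv) h)"

definition Lop :: "nat \<Rightarrow> nat \<Rightarrow> hecke \<Rightarrow> hecke" where
  "Lop N j h = (\<lambda>z. h (sref j \<circ> z) +
      (if len N (sref j \<circ> z) < len N z then (fls_X_inv - fls_X) * h z else 0))"

definition hsupp :: "nat \<Rightarrow> hecke \<Rightarrow> bool" where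
  "hsupp N h \<longleftrightarrow> (\<forall>x. x \<notin> Wgrp N \<longrightarrow> h x = 0)"

definition RW :: "nat \<Rightarrow> nat list \<Rightarrow> hecke \<Rightarrow> hecke" where
  "RW N ws h = fold (\<lambda>i g. Rop N i g) ws h"

definition RW' :: "nat \<Rightarrow> nat list \<Rightarrow> hecke \<Rightarrow> hecke" where
  "RW' N ws h = fold (\<lambda>i g. R'op N i g) ws h"

definition LW :: "nat \<Rightarrow> nat list \<Rightarrow> hecke \<Rightarrow> hecke" where
  "LW N ws h = foldr (\<lambda>i g. Lop N i g) ws h"

lemma Rop_apply: "Rop N i h z = h (z \<circ> sref i) +
      (if len N (z \<circ> sref i) < len N z then (fls_X_inv - fls_X) * h z else 0)"
  by (simp add: Rop_def mult_Hs_def)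

lemma R'op_apply: "R'op N i h z = h (z \<circ> sref i) +
      (if len N (z \<circ> sref i) < len N z then (fls_X_inv - fls_X) * h z else 0) + (fls_X - fls_X_inv) * h z"
  by (simp add: R'op_def mult_Hs_def hadd_def hscale_def)

lemma Lop_apply: "Lop N j h z = h (sref j \<circ> z) +
      (if len N (sref j \<circ> z) < len N z then (fls_X_inv - fls_X) * h z else 0)"
  by (simp add: Lop_def)

lemma RW_Nil[simp]: "RW N [] h = h" by (simp add: RW_def)
lemma RW_Cons[simp]: "RW N (i # ws) h = RW N ws (Rop N i h)" by (simp add: RW_def)
lemma RW_snoc[simp]: "RW N (ws @ [i]) h = Rop N i (RW N ws h)" by (simp add: RW_def)
lemma RW'_Nil[simp]: "RW' N [] h = h" by (simp add: RW'_def)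
lemma RW'_Cons[simp]: "RW' N (i # ws) h = RW' N ws (R'op N i h)" by (simp add: RW'_def)
lemma RW'_snoc[simp]: "RW' N (ws @ [i]) h = R'op N i (RW' N ws h)" by (simp add: RW'_def)
lemma LW_Nil[simp]: "LW N [] h = h" by (simp add: LW_def)
lemma LW_Cons[simp]: "LW N (i # ws) h = Lop N i (LW N ws h)" by (simp add: LW_def)

lemma comp_sref_notW: "1 \<le> i \<Longrightarrow> i \<le> N \<Longrightarrow> z \<notin> Wgrp N \<Longrightarrow> z \<circ> sref i \<notin> Wgrp N"
  using W_comp_sref_iff by blast

lemma sref_comp_notW: "1 \<le> i \<Longrightarrow> i \<le> N \<Longrightarrow> z \<notin> Wgrp N \<Longrightarrow> sref i \<circ> z \<notin> Wgrp N"
proof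
  assume i: "1 \<le> i" "i \<le> N" and z: "z \<notin> Wgrp N" and "sref i \<circ> z \<in> Wgrp N"
  then have "sref i \<circ> (sref i \<circ> z) \<in> Wgrp N" using W_comp[OF sref_W[OF i]] by blast
  moreover have "sref i \<circ> (sref i \<circ> z) = z" by (rule ext) simp
  ultimately show False using z by simp
qed

lemma hsupp_Rop: "hsupp N h \<Longrightarrow> 1 \<le> i \<Longrightarrow> i \<le> N \<Longrightarrow> hsupp N (Rop N i h)"
  unfolding hsupp_def Rop_apply using comp_sref_notW by auto

lemma hsupp_R'op: "hsupp N h \<Longrightarrow> 1 \<le> i \<Longrightarrow> i \<le> N \<Longrightarrow> hsupp N (R'op N i h)"
  unfolding hsupp_def R'op_apply using comp_sref_notW by auto

lemma hsupp_Lop: "hsupp N h \<Longrightarrow> 1 \<le> i \<Longrightarrow> i \<le> N \<Longrightarrow> hsupp N (Lop N i h)"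
  unfolding hsupp_def Lop_apply using sref_comp_notW by auto

lemma hsupp_RW: "hsupp N h \<Longrightarrow> set ws \<subseteq> {1..N} \<Longrightarrow> hsupp N (RW N ws h)"
  by (induction ws arbitrary: h) (auto, metis One_nat_def hsupp_Rop)

lemma hsupp_RW': "hsupp N h \<Longrightarrow> set ws \<subseteq> {1..N} \<Longrightarrow> hsupp N (RW' N ws h)"
  by (induction ws arbitrary: h) (auto, metis One_nat_def hsupp_R'op)

lemma hsupp_LW: "hsupp N h \<Longrightarrow> set ws \<subseteq> {1..N} \<Longrightarrow> hsupp N (LW N ws h)"
  by (induction ws arbitrary: h) (auto, metis One_nat_def hsupp_Lop)

lemma hsupp_Hstd: "x \<in> Wgrp N \<Longrightarrow> hsupp N (Hstd x)"
  by (auto simp: hsupp_def Hstd_def)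

lemma right_crit:
  assumes "z \<in> Wgrp N" "1 \<le> i" "i \<le> N"
  shows "(len N (z \<circ> sref i) < len N z) = (z (Suc i) < z i)"
proof -
  have "z i \<noteq> z (Suc i)" using W_inj[OF assms(1)] by (metis injD n_not_Suc_n)
  then show ?thesis using len_adj_cases[OF assms(2,3), of z] by auto
qed

lemma right_crit2:
  assumes "z \<in> Wgrp N" "1 \<le> i" "i \<le> N"
  shows "(len N (z \<circ> sref i) < len N z) \<or> (len N z < len N (z \<circ> sref i))"
proof -
  have "z i \<noteq> z (Suc i)" using W_inj[OF assms(1)] by (metis injD n_not_Suc_n)
  then show ?thesis using len_adj_cases[OF assms(2,3), of z] by auto
qed

lemma quad1:
  assumes h: "hsupp N h" and i: "1 \<le> i" "i \<le> N"
  shows "R'op N i (Rop N i h) = h"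
proof (rule ext)
  fix z
  show "R'op N i (Rop N i h) z = h z"
  proof (cases "z \<in> Wgrp N")
    case False
    then have "R'op N i (Rop N i h) z = 0" using hsupp_R'op[OF hsupp_Rop[OF h i] i] by (simp add: hsupp_def)
    moreover have "h z = 0" using h False by (simp add: hsupp_def)
    ultimately show ?thesis by simp
  next
    case True
    have zz: "z \<circ> sref i \<circ> sref i = z" by simp
    from right_crit2[OF True i] show ?thesis
    proof
      assume lt: "len N (z \<circ> sref i) < len N z"
      then have "\<not> len N (z \<circ> sref i \<circ> sref i) < len N (z \<circ> sref i)" by simp
      with lt show ?thesis unfolding R'op_apply Rop_apply zz by (simp add: algebra_simps)
    next
      assume lt: "len N z < len N (z \<circ> sref i)"
      then have "len N (z \<circ> sref i \<circ> sref i) < len N (z \<circ> sref i)" by simp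
      with lt show ?thesis unfolding R'op_apply Rop_apply zz by (simp add: algebra_simps)
    qed
  qed
qed

lemma quad2:
  assumes h: "hsupp N h" and i: "1 \<le> i" "i \<le> N"
  shows "Rop N i (R'op N i h) = h"
proof (rule ext)
  fix z
  show "Rop N i (R'op N i h) z = h z"
  proof (cases "z \<in> Wgrp N")
    case False
    then have "Rop N i (R'op N i h) z = 0" using hsupp_Rop[OF hsupp_R'op[OF h i] i] by (simp add: hsupp_def)
    moreover have "h z = 0" using h False by (simp add: hsupp_def)
    ultimately show ?thesis by simp
  next
    case True
    have zz: "z \<circ> sref i \<circ> sref i = z" by simp
    from right_crit2[OF True i] show ?thesis
    proof
      assume lt: "len N (z \<circ> sref i) < len N z"
      then have "\<not> len N (z \<circ> sref i \<circ> sref i) < len N (z \<circ> sref i)" by simp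
      with lt show ?thesis unfolding R'op_apply Rop_apply zz by (simp add: algebra_simps)
    next
      assume lt: "len N z < len N (z \<circ> sref i)"
      then have "len N (z \<circ> sref i \<circ> sref i) < len N (z \<circ> sref i)" by simp
      with lt show ?thesis unfolding R'op_apply Rop_apply zz by (simp add: algebra_simps)
    qed
  qed
qed

lemma left_crit:
  assumes "z \<in> Wgrp N" "1 \<le> j" "j \<le> N" "z p = j" "z q = Suc j"
  shows "(len N (sref j \<circ> z) < len N z) = (q < p)"
  using len_left_cases[OF assms] by auto

lemma sref_order:
  "\<not> (u = j \<and> w = Suc j) \<Longrightarrow> \<not> (u = Suc j \<and> w = j) \<Longrightarrow> (sref j u < sref j w) = (u < w)"
  by (auto simp: sref_apply)

lemma swap_eq:
  assumes z: "z \<in> Wgrp N" and "z i = j" "z (Suc i) = Suc j"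
  shows "sref j \<circ> z = z \<circ> sref i"
proof (rule ext)
  fix a
  show "(sref j \<circ> z) a = (z \<circ> sref i) a"
  proof (cases "a = i \<or> a = Suc i")
    case True then show ?thesis using assms by (auto simp: sref_apply)
  next
    case False
    then have "z a \<noteq> j" "z a \<noteq> Suc j" using assms W_inj[OF z] by (metis injD)+
    then show ?thesis using False by (auto simp: sref_apply)
  qed
qed

lemma swap_eq2:
  assumes z: "z \<in> Wgrp N" and "z i = Suc j" "z (Suc i) = j"
  shows "sref j \<circ> z = z \<circ> sref i"
proof (rule ext)
  fix a
  show "(sref j \<circ> z) a = (z \<circ> sref i) a"
  proof (cases "a = i \<or> a = Suc i")
    case True then show ?thesis using assms by (auto simp: sref_apply)
  next
    case False
    then have "z a \<noteq> j" "z a \<noteq> Suc j" using assms W_inj[OF z] by (metis injD)+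
    then show ?thesis using False by (auto simp: sref_apply)
  qed
qed

lemma comm_bools:
  assumes z: "z \<in> Wgrp N" and i: "1 \<le> i" "i \<le> N" and j: "1 \<le> j" "j \<le> N"
    and ne: "sref j \<circ> z \<noteq> z \<circ> sref i"
  shows "(len N (sref j \<circ> z \<circ> sref i) < len N (sref j \<circ> z)) = (len N (z \<circ> sref i) < len N z)"
    and "(len N (sref j \<circ> z) < len N z) = (len N (sref j \<circ> z \<circ> sref i) < len N (z \<circ> sref i))"
proof -
  have sz: "sref j \<circ> z \<in> Wgrp N" using W_comp[OF sref_W[OF j] z] .
  have c1: "\<not> (z i = j \<and> z (Suc i) = Suc j)" using swap_eq[OF z] ne by blast
  have c2: "\<not> (z i = Suc j \<and> z (Suc i) = j)" using swap_eq2[OF z] ne by blast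
  have "(len N (sref j \<circ> z \<circ> sref i) < len N (sref j \<circ> z)) = (sref j (z (Suc i)) < sref j (z i))"
    using right_crit[OF sz i] by simp
  also have "\<dots> = (z (Suc i) < z i)" using sref_order[of "z (Suc i)" j "z i"] c1 c2 by blast
  also have "\<dots> = (len N (z \<circ> sref i) < len N z)" using right_crit[OF z i] by simp
  finally show "(len N (sref j \<circ> z \<circ> sref i) < len N (sref j \<circ> z)) = (len N (z \<circ> sref i) < len N z)" .
  obtain p where p: "z p = j" using W_preimage[OF z, of j] j by auto
  obtain q where q: "z q = Suc j" using W_preimage[OF z, of "Suc j"] j by auto
  have zt: "z \<circ> sref i \<in> Wgrp N" using W_comp[OF z sref_W[OF i]] .
  have p': "(z \<circ> sref i) (sref i p) = j" "(z \<circ> sref i) (sref i q) = Suc j" using p q by auto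
  have d1: "\<not> (p = i \<and> q = Suc i)" using c1 p q by blast
  have d2: "\<not> (p = Suc i \<and> q = i)" using c2 p q by blast
  have "(len N (sref j \<circ> z) < len N z) = (q < p)" using left_crit[OF z j p q] .
  also have "\<dots> = (sref i q < sref i p)" using sref_order[of q i p] d1 d2 by blast
  also have "\<dots> = (len N (sref j \<circ> (z \<circ> sref i)) < len N (z \<circ> sref i))"
    using left_crit[OF zt j p'] by (rule sym)
  finally show "(len N (sref j \<circ> z) < len N z) = (len N (sref j \<circ> z \<circ> sref i) < len N (z \<circ> sref i))"
    by (simp add: comp_assoc)
qed

lemma comm_LR:
  assumes h: "hsupp N h" and i: "1 \<le> i" "i \<le> N" and j: "1 \<le> j" "j \<le> N"
  shows "Lop N j (Rop N i h) = Rop N i (Lop N j h)"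
proof (rule ext)
  fix z
  show "Lop N j (Rop N i h) z = Rop N i (Lop N j h) z"
  proof (cases "z \<in> Wgrp N")
    case False
    have "Lop N j (Rop N i h) z = 0" using hsupp_Lop[OF hsupp_Rop[OF h i] j] False by (simp add: hsupp_def)
    moreover have "Rop N i (Lop N j h) z = 0" using hsupp_Rop[OF hsupp_Lop[OF h j] i] False by (simp add: hsupp_def)
    ultimately show ?thesis by simp
  next
    case True
    show ?thesis
    proof (cases "sref j \<circ> z = z \<circ> sref i")
      case E: True
      have E': "z \<circ> sref i = sref j \<circ> z" using E by simp
      show ?thesis unfolding Lop_apply Rop_apply by (simp add: comp_assoc E')
    next
      case False
      note B = comm_bools[OF True i j False]
      have a: "sref j \<circ> (z \<circ> sref i) = sref j \<circ> z \<circ> sref i" by (simp add: comp_assoc)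
      show ?thesis unfolding Lop_apply Rop_apply a
        by (cases "len N (z \<circ> sref i) < len N z"; cases "len N (sref j \<circ> z) < len N z")
           (simp_all add: B algebra_simps)
    qed
  qed
qed

lemma Rop_sum: "Rop N i (\<lambda>z. \<Sum>u\<in>U. a u * f u z) = (\<lambda>z. \<Sum>u\<in>U. a u * Rop N i (f u) z)"
proof (rule ext)
  fix z
  show "Rop N i (\<lambda>z. \<Sum>u\<in>U. a u * f u z) z = (\<Sum>u\<in>U. a u * Rop N i (f u) z)"
    unfolding Rop_apply
    by (cases "len N (z \<circ> sref i) < len N z")
       (simp_all add: sum.distrib sum_distrib_left distrib_left mult.left_commute)
qed

lemma RW_sum: "RW N ws (\<lambda>z. \<Sum>u\<in>U. a u * f u z) = (\<lambda>z. \<Sum>u\<in>U. a u * RW N ws (f u) z)"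
proof (induction ws arbitrary: f)
  case Nil then show ?case by simp
next
  case (Cons i ws)
  show ?case by (simp add: Rop_sum Cons.IH)
qed

lemma comp_sref_eq_iff: "(z \<circ> sref i = x) = (z = x \<circ> sref i)"
  by (metis sref_comp_sref)

lemma sref_comp_eq_iff: "(sref i \<circ> z = x) = (z = sref i \<circ> x)"
proof -
  have "\<And>y. sref i \<circ> (sref i \<circ> y) = y" by (rule ext) simp
  then show ?thesis by metis
qed

lemma Rop_Hstd:
  assumes "len N (x \<circ> sref i) = Suc (len N x)"
  shows "Rop N i (Hstd x) = Hstd (x \<circ> sref i)"
proof (rule ext)
  fix z
  have ne: "x \<circ> sref i \<noteq> x" using assms by auto
  show "Rop N i (Hstd x) z = Hstd (x \<circ> sref i) z"
    unfolding Rop_apply Hstd_def comp_sref_eq_iff using assms ne by auto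
qed

lemma Lop_Hstd:
  assumes "len N (sref j \<circ> x) = Suc (len N x)"
  shows "Lop N j (Hstd x) = Hstd (sref j \<circ> x)"
proof (rule ext)
  fix z
  have ne: "sref j \<circ> x \<noteq> x" using assms by auto
  show "Lop N j (Hstd x) z = Hstd (sref j \<circ> x) z"
    unfolding Lop_apply Hstd_def sref_comp_eq_iff using assms ne by auto
qed

lemma RW_Hstd_red: "red N ws \<Longrightarrow> RW N ws (Hstd id) = Hstd (wordprod ws)"
proof (induction ws rule: rev_induct)
  case Nil then show ?case by simp
next
  case (snoc i ws)
  from red_snoc[OF snoc.prems] have r: "red N ws" and l: "len N (wordprod ws \<circ> sref i) = Suc (len N (wordprod ws))" by auto
  show ?case using snoc.IH[OF r] Rop_Hstd[OF l] by (simp add: o_def id_def)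
qed

lemma LW_Hstd_red: "red N ws \<Longrightarrow> LW N ws (Hstd id) = Hstd (wordprod ws)"
proof (induction ws)
  case Nil then show ?case by simp
next
  case (Cons i ws)
  from red_Cons[OF Cons.prems] have r: "red N ws" and l: "len N (sref i \<circ> wordprod ws) = Suc (len N (wordprod ws))" by auto
  show ?case using Cons.IH[OF r] Lop_Hstd[OF l] by (simp add: o_def id_def)
qed

lemma finite_W: "finite (Wgrp N)"
  unfolding Wgrp_def by (rule finite_permutations) simp

lemma hsupp_decomp:
  assumes "hsupp N g"
  shows "(\<lambda>z. \<Sum>u\<in>Wgrp N. g u * Hstd u z) = g"
proof (rule ext)
  fix z
  have "(\<Sum>u\<in>Wgrp N. g u * Hstd u z) = (\<Sum>u\<in>Wgrp N. if u = z then g z else 0)"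
    by (rule sum.cong) (auto simp: Hstd_def)
  also have "\<dots> = (if z \<in> Wgrp N then g z else 0)" by (simp add: sum.delta finite_W)
  also have "\<dots> = g z" using assms by (auto simp: hsupp_def)
  finally show "(\<Sum>u\<in>Wgrp N. g u * Hstd u z) = g z" .
qed

lemma Rop_LW:
  assumes "hsupp N h" "set ws \<subseteq> {1..N}" "1 \<le> i" "i \<le> N"
  shows "Rop N i (LW N ws h) = LW N ws (Rop N i h)"
  using assms
proof (induction ws arbitrary: h)
  case Nil then show ?case by simp
next
  case (Cons j ws)
  have j: "1 \<le> j" "j \<le> N" using Cons.prems by auto
  have hs: "hsupp N (LW N ws h)" using hsupp_LW Cons.prems by auto
  have "Rop N i (LW N (j # ws) h) = Lop N j (Rop N i (LW N ws h))"
    using comm_LR[OF hs Cons.prems(3,4) j] by simp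
  also have "\<dots> = Lop N j (LW N ws (Rop N i h))" using Cons.IH Cons.prems by simp
  finally show ?case by simp
qed

lemma RW_LW:
  assumes "hsupp N h" "set ws \<subseteq> {1..N}" "set ws' \<subseteq> {1..N}"
  shows "RW N ws (LW N ws' h) = LW N ws' (RW N ws h)"
  using assms
proof (induction ws arbitrary: h)
  case Nil then show ?case by simp
next
  case (Cons i ws)
  have i: "1 \<le> i" "i \<le> N" using Cons.prems by auto
  have "RW N (i # ws) (LW N ws' h) = RW N ws (LW N ws' (Rop N i h))"
    using Rop_LW[OF Cons.prems(1,3) i] by simp
  also have "\<dots> = LW N ws' (RW N ws (Rop N i h))"
    using Cons.IH[OF hsupp_Rop[OF Cons.prems(1) i]] Cons.prems by simp
  finally show ?case by simp
qed

lemma RW_indep: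
  assumes r1: "red N ws1" and r2: "red N ws2" and e: "wordprod ws1 = wordprod ws2" and g: "hsupp N g"
  shows "RW N ws1 g = RW N ws2 g"
proof -
  have s1: "set ws1 \<subseteq> {1..N}" and s2: "set ws2 \<subseteq> {1..N}" using r1 r2 by (auto simp: red_def)
  have key: "RW N ws1 (Hstd u) = RW N ws2 (Hstd u)" if u: "u \<in> Wgrp N" for u
  proof -
    let ?w = "rword N u"
    have ru: "red N ?w" using red_rword[OF u] .
    have su: "set ?w \<subseteq> {1..N}" using ru by (simp add: red_def)
    have hu: "Hstd u = LW N ?w (Hstd id)" using LW_Hstd_red[OF ru] rword_prop[OF u] by simp
    have hid: "hsupp N (Hstd id)" using hsupp_Hstd[OF W_id] .
    have "RW N ws1 (Hstd u) = LW N ?w (Hstd (wordprod ws1))"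
      unfolding hu using RW_LW[OF hid s1 su] RW_Hstd_red[OF r1] by simp
    moreover have "RW N ws2 (Hstd u) = LW N ?w (Hstd (wordprod ws2))"
      unfolding hu using RW_LW[OF hid s2 su] RW_Hstd_red[OF r2] by simp
    ultimately show ?thesis using e by simp
  qed
  have "RW N ws1 g = RW N ws1 (\<lambda>z. \<Sum>u\<in>Wgrp N. g u * Hstd u z)" using hsupp_decomp[OF g] by simp
  also have "\<dots> = (\<lambda>z. \<Sum>u\<in>Wgrp N. g u * RW N ws1 (Hstd u) z)" by (rule RW_sum)
  also have "\<dots> = (\<lambda>z. \<Sum>u\<in>Wgrp N. g u * RW N ws2 (Hstd u) z)"
    by (rule ext, rule sum.cong) (auto simp: key)
  also have "\<dots> = RW N ws2 (\<lambda>z. \<Sum>u\<in>Wgrp N. g u * Hstd u z)" by (rule RW_sum[symmetric])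
  also have "\<dots> = RW N ws2 g" using hsupp_decomp[OF g] by simp
  finally show ?thesis .
qed

lemma RW'_RW_rev:
  assumes "hsupp N h" "set ws \<subseteq> {1..N}"
  shows "RW' N ws (RW N (rev ws) h) = h"
  using assms
proof (induction ws arbitrary: h)
  case Nil then show ?case by simp
next
  case (Cons i ws)
  have i: "1 \<le> i" "i \<le> N" using Cons.prems by auto
  have hs: "hsupp N (RW N (rev ws) h)" using hsupp_RW Cons.prems by auto
  show ?case using quad1[OF hs i] Cons.IH Cons.prems by simp
qed

lemma RW_rev_RW':
  assumes "hsupp N h" "set ws \<subseteq> {1..N}"
  shows "RW N (rev ws) (RW' N ws h) = h"
  using assms
proof (induction ws arbitrary: h rule: rev_induct)
  case Nil then show ?case by simp
next
  case (snoc i ws)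
  have i: "1 \<le> i" "i \<le> N" using snoc.prems by auto
  have hs: "hsupp N (RW' N ws h)" using hsupp_RW' snoc.prems by auto
  show ?case using quad2[OF hs i] snoc.IH snoc.prems by simp
qed

lemma RW'_indep:
  assumes r1: "red N ws1" and r2: "red N ws2" and e: "wordprod ws1 = wordprod ws2"
  shows "RW' N ws1 (Hstd id) = RW' N ws2 (Hstd id)"
proof -
  have s1: "set ws1 \<subseteq> {1..N}" and s2: "set ws2 \<subseteq> {1..N}" using r1 r2 by (auto simp: red_def)
  let ?G = "RW' N ws2 (Hstd id)"
  have hid: "hsupp N (Hstd id)" using hsupp_Hstd[OF W_id] .
  have hG: "hsupp N ?G" using hsupp_RW'[OF hid s2] .
  have e': "wordprod (rev ws1) = wordprod (rev ws2)"
  proof -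
    have "wordprod (rev ws1) = wordprod (rev ws1) \<circ> (wordprod ws2 \<circ> wordprod (rev ws2))"
      by (simp add: wordprod_rev2)
    also have "\<dots> = (wordprod (rev ws1) \<circ> wordprod ws1) \<circ> wordprod (rev ws2)"
      by (simp add: e comp_assoc)
    also have "\<dots> = wordprod (rev ws2)" by (simp add: wordprod_rev1)
    finally show ?thesis .
  qed
  have "RW N (rev ws1) ?G = RW N (rev ws2) ?G"
    by (rule RW_indep[OF red_rev[OF r1] red_rev[OF r2] e' hG])
  also have "\<dots> = Hstd id" using RW_rev_RW'[OF hid s2] .
  finally have "RW N (rev ws1) ?G = Hstd id" .
  then have "RW' N ws1 (Hstd id) = RW' N ws1 (RW N (rev ws1) ?G)" by simp
  also have "\<dots> = ?G" using RW'_RW_rev[OF hG s1] .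
  finally show ?thesis .
qed

lemma barH_RW': "barH N x = RW' N (rword N x) (Hstd id)"
  by (simp add: barH_def RW'_def R'op_def)

lemma barH_red:
  assumes "x \<in> Wgrp N" "red N ws" "wordprod ws = x"
  shows "barH N x = RW' N ws (Hstd id)"
  unfolding barH_RW' using RW'_indep[OF red_rword[OF assms(1)] assms(2)] rword_prop[OF assms(1)] assms(3)
  by simp

lemma hsupp_barH: "x \<in> Wgrp N \<Longrightarrow> hsupp N (barH N x)"
  unfolding barH_RW' using hsupp_RW'[OF hsupp_Hstd[OF W_id]] rword_prop by blast

lemma barH_up:
  assumes x: "x \<in> Wgrp N" and i: "1 \<le> i" "i \<le> N" and l: "len N (x \<circ> sref i) = Suc (len N x)"
  shows "barH N (x \<circ> sref i) = R'op N i (barH N x)"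
proof -
  let ?w = "rword N x @ [i]"
  have rp: "set (rword N x) \<subseteq> {1..N}" "wordprod (rword N x) = x" "length (rword N x) = len N x"
    using rword_prop[OF x] by auto
  have r: "red N ?w" using rp i l by (simp add: red_def)
  have xs: "x \<circ> sref i \<in> Wgrp N" using W_comp[OF x sref_W[OF i]] .
  have "barH N (x \<circ> sref i) = RW' N ?w (Hstd id)"
    by (rule barH_red[OF xs r]) (simp add: rp)
  also have "\<dots> = R'op N i (barH N x)" by (simp add: barH_RW')
  finally show ?thesis .
qed

lemma barH_down:
  assumes x: "x \<in> Wgrp N" and i: "1 \<le> i" "i \<le> N" and l: "len N x = Suc (len N (x \<circ> sref i))"
  shows "Rop N i (barH N x) = barH N (x \<circ> sref i)"
proof -
  have xs: "x \<circ> sref i \<in> Wgrp N" using W_comp[OF x sref_W[OF i]] .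
  have "barH N (x \<circ> sref i \<circ> sref i) = R'op N i (barH N (x \<circ> sref i))"
    by (rule barH_up[OF xs i]) (simp add: l)
  then have "barH N x = R'op N i (barH N (x \<circ> sref i))" by simp
  then show ?thesis using quad2[OF hsupp_barH[OF xs] i] by simp
qed

definition lmono :: "int \<Rightarrow> int fls" where
  "lmono i = fls_shift (-i) 1"

lemma mono_nth: "fls_nth (lmono i) n = (if n = i then 1 else 0)"
  by (simp add: lmono_def)

lemma mono_mult: "lmono a * lmono b = lmono (a + b)"
  unfolding lmono_def using fls_X_intpow_times_fls_X_intpow[of a b] by (simp add: add.commute)

lemma mono_0: "lmono 0 = 1" by (simp add: lmono_def)
lemma X_mono: "fls_X = lmono 1" by (simp add: lmono_def fls_X_conv_shift_1)
lemma Xinv_mono: "fls_X_inv = lmono (-1)" by (simp add: lmono_def fls_X_inv_conv_shift_1)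
lemma Xpow_mono: "fls_X ^ n = lmono (int n)" by (simp add: lmono_def fls_X_power_conv_shift_1)

lemma mono_times_nth: "fls_nth (lmono i * p) n = fls_nth p (n - i)"
  unfolding lmono_def by (simp add: fls_X_intpow_times_conv_shift)

lemma lpoly_mono: "lpoly (lmono i)"
  unfolding lpoly_def mono_nth by simp

lemma lpoly_0: "lpoly 0" by (simp add: lpoly_def)

lemma lpoly_add: "lpoly p \<Longrightarrow> lpoly q \<Longrightarrow> lpoly (p + q)"
  unfolding lpoly_def
  by (rule finite_subset[of _ "{n. fls_nth p n \<noteq> 0} \<union> {n. fls_nth q n \<noteq> 0}"]) auto

lemma lpoly_diff: "lpoly p \<Longrightarrow> lpoly q \<Longrightarrow> lpoly (p - q)"
  unfolding lpoly_def
  by (rule finite_subset[of _ "{n. fls_nth p n \<noteq> 0} \<union> {n. fls_nth q n \<noteq> 0}"]) auto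

lemma lpoly_mono_times: "lpoly p \<Longrightarrow> lpoly (lmono i * p)"
proof -
  assume "lpoly p"
  then have "finite ((\<lambda>n. n + i) ` {n. fls_nth p n \<noteq> 0})" unfolding lpoly_def by simp
  moreover have "{n. fls_nth (lmono i * p) n \<noteq> 0} = (\<lambda>n. n + i) ` {n. fls_nth p n \<noteq> 0}"
    by (auto simp: mono_times_nth image_iff) (metis diff_add_cancel)
  ultimately show ?thesis unfolding lpoly_def by simp
qed

lemma lpoly_X_times: "lpoly p \<Longrightarrow> lpoly (fls_X * p)"
  using lpoly_mono_times by (simp add: X_mono)

lemma lpoly_Xinv_times: "lpoly p \<Longrightarrow> lpoly (fls_X_inv * p)"
  using lpoly_mono_times by (simp add: Xinv_mono)

lemma lbar_nth:
  assumes "lpoly p"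
  shows "fls_nth (lbar p) n = fls_nth p (- n)"
proof -
  have "finite {n::nat. fls_nth p (- (- int n)) \<noteq> 0}"
  proof -
    have "{n::nat. fls_nth p (- (- int n)) \<noteq> 0} = int -` {n. fls_nth p n \<noteq> 0}" by auto
    then show ?thesis using assms unfolding lpoly_def
      by (metis finite_vimageI inj_of_nat)
  qed
  then show ?thesis unfolding lbar_def using assms
    by (simp add: nth_Abs_fls_finite_nonzero_neg_nth)
qed

lemma lpoly_lbar: "lpoly p \<Longrightarrow> lpoly (lbar p)"
proof -
  assume a: "lpoly p"
  have "{n. fls_nth (lbar p) n \<noteq> 0} = uminus ` {n. fls_nth p n \<noteq> 0}"
    by (auto simp: lbar_nth[OF a] image_iff) (metis minus_minus)
  then show ?thesis using a unfolding lpoly_def by simp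
qed

lemma lbar_add: "lpoly p \<Longrightarrow> lpoly q \<Longrightarrow> lbar (p + q) = lbar p + lbar q"
  by (rule fls_eqI) (simp add: lbar_nth lpoly_add)

lemma lbar_diff: "lpoly p \<Longrightarrow> lpoly q \<Longrightarrow> lbar (p - q) = lbar p - lbar q"
  by (rule fls_eqI) (simp add: lbar_nth lpoly_diff)

lemma lbar_mono_times: "lpoly p \<Longrightarrow> lbar (lmono i * p) = lmono (-i) * lbar p"
  by (rule fls_eqI) (simp add: lbar_nth lpoly_mono_times mono_times_nth)

lemma lbar_0: "lbar 0 = 0"
  by (rule fls_eqI) (simp add: lbar_nth lpoly_0)

lemma lbar_mono: "lbar (lmono i) = lmono (-i)"
  by (rule fls_eqI) (auto simp: lbar_nth lpoly_mono mono_nth)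

lemma lbar_1: "lbar 1 = 1"
  using lbar_mono[of 0] by (simp add: mono_0)

lemma vZv_0: "vZv 0" by (simp add: vZv_def lpoly_0)

lemma vZv_mono: "0 < i \<Longrightarrow> vZv (lmono i)"
  by (simp add: vZv_def lpoly_mono mono_nth)

lemma vZv_diff: "vZv p \<Longrightarrow> vZv q \<Longrightarrow> vZv (p - q)"
  by (simp add: vZv_def lpoly_diff)

definition hpoly :: "hecke \<Rightarrow> bool" where
  "hpoly h \<longleftrightarrow> (\<forall>x. lpoly (h x))"

definition Bop :: "nat \<Rightarrow> nat \<Rightarrow> hecke \<Rightarrow> hecke" where
  "Bop N i h = hadd (mult_Hs N h i) (hscale fls_X h)"

lemma Bop_apply: "Bop N i h x = h (x \<circ> sref i) + (if len N (x \<circ> sref i) < len N x then fls_X_inv else fls_X) * h x"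
  by (simp add: Bop_def hadd_def hscale_def mult_Hs_def algebra_simps)

lemma Bop_Rop: "Bop N i h x = Rop N i h x + fls_X * h x"
  by (simp add: Bop_def hadd_def hscale_def Rop_def)

lemma hpoly_Bop: "hpoly h \<Longrightarrow> hpoly (Bop N i h)"
  unfolding hpoly_def Bop_apply
  by (auto intro!: lpoly_add lpoly_X_times lpoly_Xinv_times)

lemma hsupp_Bop: "hsupp N h \<Longrightarrow> 1 \<le> i \<Longrightarrow> i \<le> N \<Longrightarrow> hsupp N (Bop N i h)"
  unfolding hsupp_def Bop_Rop using hsupp_Rop[of N h i] by (auto simp: hsupp_def)

lemma Bop_barH:
  assumes x: "x \<in> Wgrp N" and i: "1 \<le> i" "i \<le> N"
  shows "Bop N i (barH N x) z = barH N (x \<circ> sref i) z +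
           (if len N (x \<circ> sref i) < len N x then fls_X else fls_X_inv) * barH N x z"
proof -
  have ne: "x i \<noteq> x (Suc i)" using W_inj[OF x] by (metis injD n_not_Suc_n)
  from len_adj_cases[OF i, of x] ne
  have "len N x = Suc (len N (x \<circ> sref i)) \<or> len N (x \<circ> sref i) = Suc (len N x)" by auto
  then show ?thesis
  proof
    assume l: "len N x = Suc (len N (x \<circ> sref i))"
    have "Rop N i (barH N x) = barH N (x \<circ> sref i)" by (rule barH_down[OF x i l])
    then show ?thesis using l unfolding Bop_Rop by simp
  next
    assume l: "len N (x \<circ> sref i) = Suc (len N x)"
    have "barH N (x \<circ> sref i) = R'op N i (barH N x)" by (rule barH_up[OF x i l])
    then have "barH N (x \<circ> sref i) z = Rop N i (barH N x) z + (fls_X - fls_X_inv) * barH N x z"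
      by (simp add: R'op_def Rop_def hadd_def hscale_def)
    then show ?thesis using l unfolding Bop_Rop by (simp add: algebra_simps)
  qed
qed

lemma lbar_Bop:
  assumes "hpoly h"
  shows "lbar (Bop N i h x) = lbar (h (x \<circ> sref i)) +
           (if len N (x \<circ> sref i) < len N x then fls_X else fls_X_inv) * lbar (h x)"
proof -
  have p: "lpoly (h x)" "lpoly (h (x \<circ> sref i))" using assms by (auto simp: hpoly_def)
  show ?thesis unfolding Bop_apply X_mono Xinv_mono
    using p by (simp add: lbar_add lpoly_mono_times lbar_mono_times)
qed

lemma hbar_Bop:
  assumes h: "hsupp N h" "hpoly h" and i: "1 \<le> i" "i \<le> N"
  shows "hbar N (Bop N i h) = Bop N i (hbar N h)"
proof (rule ext)
  fix z
  let ?W = "Wgrp N"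
  let ?c = "\<lambda>x. (if len N (x \<circ> sref i) < len N x then fls_X else fls_X_inv)"
  have reidx: "(\<Sum>x\<in>?W. lbar (h (x \<circ> sref i)) * barH N x z) = (\<Sum>x\<in>?W. lbar (h x) * barH N (x \<circ> sref i) z)"
    by (rule sum.reindex_bij_witness[of _ "\<lambda>x. x \<circ> sref i" "\<lambda>x. x \<circ> sref i"])
       (auto simp: W_comp_sref_iff[OF i])
  have "hbar N (Bop N i h) z = (\<Sum>x\<in>?W. lbar (Bop N i h x) * barH N x z)" by (simp add: hbar_def)
  also have "\<dots> = (\<Sum>x\<in>?W. lbar (h (x \<circ> sref i)) * barH N x z + ?c x * lbar (h x) * barH N x z)"
    by (rule sum.cong) (simp_all add: lbar_Bop[OF h(2)] algebra_simps)
  also have "\<dots> = (\<Sum>x\<in>?W. lbar (h x) * barH N (x \<circ> sref i) z) + (\<Sum>x\<in>?W. ?c x * lbar (h x) * barH N x z)"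
    by (simp add: sum.distrib reidx)
  also have "\<dots> = (\<Sum>x\<in>?W. lbar (h x) * Bop N i (barH N x) z)"
    by (simp add: sum.distrib Bop_barH[OF _ i] algebra_simps)
  also have "\<dots> = Bop N i (hbar N h) z"
    by (simp add: Bop_Rop Rop_apply hbar_def sum_distrib_left sum.distrib algebra_simps)
  finally show "hbar N (Bop N i h) z = Bop N i (hbar N h) z" .
qed

lemma hbar_hadd:
  assumes "hpoly f" "hpoly g"
  shows "hbar N (hadd f g) = hadd (hbar N f) (hbar N g)"
proof (rule ext)
  fix z
  have "\<And>x. lbar (f x + g x) = lbar (f x) + lbar (g x)"
    using assms by (simp add: hpoly_def lbar_add)
  then show "hbar N (hadd f g) z = hadd (hbar N f) (hbar N g) z"
    by (simp add: hbar_def hadd_def sum.distrib distrib_right)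
qed

lemma hbar_diff:
  assumes "hpoly f" "hpoly g"
  shows "hbar N (\<lambda>x. f x - g x) = (\<lambda>z. hbar N f z - hbar N g z)"
proof (rule ext)
  fix z
  have "\<And>x. lbar (f x - g x) = lbar (f x) - lbar (g x)"
    using assms by (simp add: hpoly_def lbar_diff)
  then show "hbar N (\<lambda>x. f x - g x) z = hbar N f z - hbar N g z"
    by (simp add: hbar_def sum_subtractf left_diff_distrib)
qed

lemma rword_id: "rword N id = []"
  using rword_prop[OF W_id, of N] by simp

lemma barH_id: "barH N id = Hstd id"
  by (simp add: barH_RW' rword_id)

lemma lpoly_1: "lpoly 1"
  using lpoly_mono[of 0] by (simp add: mono_0)

lemma hpoly_Hstd: "hpoly (Hstd x)"
  by (simp add: hpoly_def Hstd_def lpoly_0 lpoly_1)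

lemma hbar_Hstd_id: "hbar N (Hstd id) = Hstd id"
proof (rule ext)
  fix z
  have "(\<Sum>x\<in>Wgrp N. lbar (Hstd id x) * barH N x z) = (\<Sum>x\<in>Wgrp N. if x = id then barH N id z else 0)"
    by (rule sum.cong) (auto simp: Hstd_def lbar_0 lbar_1)
  also have "\<dots> = barH N id z" by (simp add: sum.delta finite_W W_id)
  finally show "hbar N (Hstd id) z = Hstd id z" by (simp add: hbar_def barH_id)
qed

lemma tri:
  assumes "red N ws"
  shows "RW' N ws (Hstd id) (wordprod ws) = 1 \<and>
         (\<forall>z. RW' N ws (Hstd id) z \<noteq> 0 \<longrightarrow> z = wordprod ws \<or> len N z < length ws)"
  using assms
proof (induction ws rule: rev_induct)
  case Nil then show ?case by (simp add: Hstd_def)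
next
  case (snoc i ws)
  from red_snoc[OF snoc.prems] have r: "red N ws" and l: "len N (wordprod ws \<circ> sref i) = Suc (len N (wordprod ws))" by auto
  have i: "1 \<le> i" "i \<le> N" using snoc.prems by (auto simp: red_def)
  have k: "length ws = len N (wordprod ws)" using r by (simp add: red_def)
  let ?G = "RW' N ws (Hstd id)"
  let ?p = "wordprod ws"
  note IH = snoc.IH[OF r]
  have G1: "?G ?p = 1" using IH by blast
  have G2: "\<And>z. ?G z \<noteq> 0 \<Longrightarrow> z = ?p \<or> len N z < length ws" using IH by blast
  have Gz: "?G z = 0" if "len N z \<ge> length ws" "z \<noteq> ?p" for z using G2 that by force
  have ps: "?p \<circ> sref i \<noteq> ?p" using l by auto
  have "?G (?p \<circ> sref i) = 0" using Gz[of "?p \<circ> sref i"] l k ps by simp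
  then have c1: "R'op N i ?G (?p \<circ> sref i) = 1" unfolding R'op_apply using G1 by simp
  have c2: "R'op N i ?G z = 0" if z1: "z \<noteq> ?p \<circ> sref i" and z2: "\<not> len N z < Suc (length ws)" for z
  proof -
    have "?G z = 0" using Gz[of z] z2 k by force
    moreover have "?G (z \<circ> sref i) = 0"
    proof -
      have "z \<circ> sref i \<noteq> ?p" using z1 comp_sref_eq_iff by blast
      moreover have "len N z \<le> Suc (len N (z \<circ> sref i))" using len_adj_le2[OF i] .
      ultimately show ?thesis using Gz[of "z \<circ> sref i"] z2 by force
    qed
    ultimately show ?thesis unfolding R'op_apply by simp
  qed
  have e1: "RW' N (ws @ [i]) (Hstd id) = R'op N i ?G" by (simp only: RW'_snoc)
  have e2: "wordprod (ws @ [i]) = ?p \<circ> sref i" by (simp only: wordprod_snoc)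
  have e3: "length (ws @ [i]) = Suc (length ws)" by simp
  show ?case unfolding e1 e2 e3 using c1 c2 by blast
qed

lemma barH_tri:
  assumes x: "x \<in> Wgrp N"
  shows "barH N x x = 1" "barH N x z \<noteq> 0 \<Longrightarrow> z = x \<or> len N z < len N x"
  using tri[OF red_rword[OF x]] rword_prop[OF x] by (auto simp: barH_RW')

definition klP :: "nat \<Rightarrow> perm \<Rightarrow> hecke \<Rightarrow> bool" where
  "klP N w b \<longleftrightarrow> (\<forall>x. x \<notin> Wgrp N \<longrightarrow> b x = 0) \<and> (\<forall>x. lpoly (b x)) \<and>
                    hbar N b = b \<and> b w = 1 \<and> (\<forall>x. x \<noteq> w \<longrightarrow> vZv (b x))"

lemma kl_unique:
  assumes b: "klP N w b" and b': "klP N w b'"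
  shows "b = b'"
proof -
  define d where "d = (\<lambda>x. b x - b' x)"
  have hp: "hpoly b" "hpoly b'" using b b' by (auto simp: klP_def hpoly_def)
  have dsupp: "\<And>x. x \<notin> Wgrp N \<Longrightarrow> d x = 0" using b b' by (auto simp: klP_def d_def)
  have dbar: "hbar N d = d" using hbar_diff[OF hp, of N] b b' by (simp add: klP_def d_def)
  have dv: "\<And>x. vZv (d x)"
  proof -
    fix x show "vZv (d x)"
    proof (cases "x = w")
      case True then show ?thesis using b b' by (simp add: klP_def d_def vZv_0)
    next
      case False then show ?thesis using b b' by (simp add: klP_def d_def vZv_diff)
    qed
  qed
  have "\<forall>x. d x = 0"
  proof (rule ccontr)
    assume "\<not> (\<forall>x. d x = 0)"
    define S where "S = {x \<in> Wgrp N. d x \<noteq> 0}"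
    have Sne: "S \<noteq> {}" using \<open>\<not> (\<forall>x. d x = 0)\<close> dsupp by (auto simp: S_def)
    have Sfin: "finite S" using finite_W by (simp add: S_def)
    define m where "m = Max (len N ` S)"
    have "m \<in> len N ` S" using Max_in[of "len N ` S"] Sne Sfin by (simp add: m_def)
    then obtain x where xS: "x \<in> S" and xm: "len N x = m" by auto
    have maxl: "\<And>y. y \<in> S \<Longrightarrow> len N y \<le> len N x"
      using Sfin xm by (auto simp: m_def)
    have xW: "x \<in> Wgrp N" using xS by (simp add: S_def)
    have terms: "lbar (d y) * barH N y x = (if y = x then lbar (d x) else 0)" if yW: "y \<in> Wgrp N" for y
    proof (cases "y = x")
      case True then show ?thesis using barH_tri(1)[OF xW] by simp
    next
      case False
      show ?thesis
      proof (cases "d y = 0")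
        case True then show ?thesis using False by (simp add: lbar_0)
      next
        case dy: False
        then have "y \<in> S" using yW by (simp add: S_def)
        then have "len N y \<le> len N x" by (rule maxl)
        then have "barH N y x = 0" using barH_tri(2)[OF yW, of x] False by auto
        then show ?thesis using False by simp
      qed
    qed
    have "d x = hbar N d x" using dbar by simp
    also have "\<dots> = (\<Sum>y\<in>Wgrp N. if y = x then lbar (d x) else 0)"
      unfolding hbar_def by (rule sum.cong) (auto simp: terms)
    also have "\<dots> = lbar (d x)" using xW by (simp add: sum.delta finite_W)
    finally have dx: "d x = lbar (d x)" .
    have "d x = 0"
    proof (rule fls_eqI)
      fix n
      have lp: "lpoly (d x)" using dv[of x] by (simp add: vZv_def)
      show "fls_nth (d x) n = fls_nth 0 n"
      proof (cases "n \<le> 0")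
        case True then show ?thesis using dv[of x] by (simp add: vZv_def)
      next
        case False
        have "fls_nth (d x) n = fls_nth (lbar (d x)) n" using dx by simp
        also have "\<dots> = fls_nth (d x) (- n)" by (rule lbar_nth[OF lp])
        also have "\<dots> = 0" using dv[of x] False by (simp add: vZv_def)
        finally show ?thesis by simp
      qed
    qed
    then show False using xS by (simp add: S_def)
  qed
  then show ?thesis by (auto simp: d_def fun_eq_iff)
qed

lemma kl_eq:
  assumes "klP N w b"
  shows "kl N w = b"
  unfolding kl_def
proof (rule the_equality)
  show "(\<forall>x. x \<notin> Wgrp N \<longrightarrow> b x = 0) \<and> (\<forall>x. lpoly (b x)) \<and> hbar N b = b \<and> b w = 1 \<and> (\<forall>x. x \<noteq> w \<longrightarrow> vZv (b x))"
    using assms by (simp add: klP_def)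
next
  fix b'
  assume "(\<forall>x. x \<notin> Wgrp N \<longrightarrow> b' x = 0) \<and> (\<forall>x. lpoly (b' x)) \<and> hbar N b' = b' \<and> b' w = 1 \<and> (\<forall>x. x \<noteq> w \<longrightarrow> vZv (b' x))"
  then have "klP N w b'" by (simp add: klP_def)
  then show "b' = b" using kl_unique[OF _ assms] by blast
qed

lemma sref_ne_id: "sref j \<noteq> id"
proof
  assume "sref j = id"
  then have "sref j j = j" by simp
  moreover have "sref j j = Suc j" by (simp add: sref_apply)
  ultimately show False by simp
qed

lemma len_sref: "1 \<le> j \<Longrightarrow> j \<le> N \<Longrightarrow> len N (sref j) = 1"
  using len_adj_up[of j N id] by simp

lemma rword_sref:
  assumes j: "1 \<le> j" "j \<le> N"
  shows "rword N (sref j) = [j]"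
proof -
  let ?r = "rword N (sref j)"
  have rp: "set ?r \<subseteq> {1..N} \<and> wordprod ?r = sref j \<and> length ?r = len N (sref j)"
    by (rule rword_prop[OF sref_W[OF j]])
  have p2: "wordprod ?r = sref j" using rp by blast
  have p3: "length ?r = 1" using rp len_sref[OF j] by metis
  obtain i where i: "?r = [i]"
  proof (cases ?r)
    case Nil then show ?thesis using p3 by simp
  next
    case (Cons a t)
    then have "t = []" using p3 by simp
    then show ?thesis using Cons that by simp
  qed
  have "wordprod [i] = sref j" using p2 by (simp only: i)
  then have e: "sref i = sref j" by simp
  have "sref i i = Suc i" by (simp add: sref_apply)
  then have "sref j i = Suc i" using e by simp
  then have "(if i = j then Suc j else if i = Suc j then j else i) = Suc i" by (simp only: sref_apply)
  then have "i = j" by (cases "i = j"; cases "i = Suc j") auto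
  then show ?thesis using i by simp
qed

lemma mult_H_id: "mult_H N h id = h"
  by (simp add: mult_H_def rword_id)

lemma mult_H_sref: "1 \<le> j \<Longrightarrow> j \<le> N \<Longrightarrow> mult_H N h (sref j) = mult_Hs N h j"
  by (simp add: mult_H_def rword_sref)

lemma mult_Hs_zero: "mult_Hs N (\<lambda>_. 0) i = (\<lambda>_. 0)"
  by (simp add: mult_Hs_def fun_eq_iff)

lemma mult_H_zero: "mult_H N (\<lambda>_. 0) y = (\<lambda>_. 0)"
proof -
  have "\<And>ws. fold (\<lambda>i g. mult_Hs N g i) ws (\<lambda>_. 0) = (\<lambda>_. 0)"
  proof -
    fix ws show "fold (\<lambda>i g. mult_Hs N g i) ws (\<lambda>_. 0) = (\<lambda>_. 0)"
      by (induction ws) (simp_all add: mult_Hs_zero)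
  qed
  then show ?thesis by (simp add: mult_H_def)
qed

lemma Bs_apply:
  assumes j: "1 \<le> j" "j \<le> N"
  shows "Bop N j (Hstd id) x = (if x = sref j then 1 else 0) + (if x = id then fls_X else 0)"
proof -
  have ne: "sref j \<noteq> id" by (rule sref_ne_id)
  have "(x \<circ> sref j = id) = (x = sref j)" by (simp add: comp_sref_eq_iff)
  then show ?thesis unfolding Bop_apply Hstd_def using ne len_sref[OF j]
    by auto
qed

lemma hmult_Bs:
  assumes j: "1 \<le> j" "j \<le> N"
  shows "hmult N h (Bop N j (Hstd id)) = Bop N j h"
proof (rule ext)
  fix z
  have ne: "sref j \<noteq> id" by (rule sref_ne_id)
  have t: "mult_H N (hscale (Bop N j (Hstd id) y) h) y z =
           (if y = sref j then mult_Hs N h j z else 0) + (if y = id then fls_X * h z else 0)" for y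
  proof (cases "y = sref j")
    case True
    then show ?thesis using ne Bs_apply[OF j, of y] mult_H_sref[OF j]
      by (simp add: hscale_def)
  next
    case False
    show ?thesis
    proof (cases "y = id")
      case True then show ?thesis using ne Bs_apply[OF j, of y] mult_H_id
        by (simp add: hscale_def)
    next
      case False2: False
      have "hscale (Bop N j (Hstd id) y) h = (\<lambda>_. 0)"
        using Bs_apply[OF j, of y] False False2 by (simp add: hscale_def)
      then show ?thesis using False False2 mult_H_zero by simp
    qed
  qed
  have "hmult N h (Bop N j (Hstd id)) z =
        (\<Sum>y\<in>Wgrp N. (if y = sref j then mult_Hs N h j z else 0) + (if y = id then fls_X * h z else 0))"
    unfolding hmult_def by (rule sum.cong) (simp_all add: t)
  also have "\<dots> = mult_Hs N h j z + fls_X * h z"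
    by (simp add: sum.distrib sum.delta' finite_W W_id sref_W[OF j])
  also have "\<dots> = Bop N j h z" by (simp add: Bop_def hadd_def hscale_def)
  finally show "hmult N h (Bop N j (Hstd id)) z = Bop N j h z" .
qed

lemma kl_sref:
  assumes j: "1 \<le> j" "j \<le> N"
  shows "kl N (sref j) = Bop N j (Hstd id)"
proof (rule kl_eq)
  have ne: "sref j \<noteq> id" by (rule sref_ne_id)
  have hs: "hsupp N (Bop N j (Hstd id))" using hsupp_Bop[OF hsupp_Hstd[OF W_id] j] .
  have hp: "hpoly (Bop N j (Hstd id))" using hpoly_Bop[OF hpoly_Hstd] .
  show "klP N (sref j) (Bop N j (Hstd id))"
    unfolding klP_def
  proof (intro conjI allI impI)
    fix x assume "x \<notin> Wgrp N" then show "Bop N j (Hstd id) x = 0" using hs by (simp add: hsupp_def)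
  next
    fix x show "lpoly (Bop N j (Hstd id) x)" using hp by (simp add: hpoly_def)
  next
    show "hbar N (Bop N j (Hstd id)) = Bop N j (Hstd id)"
      using hbar_Bop[OF hsupp_Hstd[OF W_id] hpoly_Hstd j] hbar_Hstd_id by simp
  next
    show "Bop N j (Hstd id) (sref j) = 1" using Bs_apply[OF j] ne by simp
  next
    fix x assume "x \<noteq> sref j"
    then show "vZv (Bop N j (Hstd id) x)" using Bs_apply[OF j, of x]
      by (simp add: X_mono vZv_mono vZv_0)
  qed
qed

definition Dset :: "nat \<Rightarrow> nat \<Rightarrow> nat \<Rightarrow> perm set" where
  "Dset N k m = {y \<in> Wgrp N. (\<forall>a. k < a \<longrightarrow> y a = a) \<and> (\<forall>a. 1 \<le> a \<and> a \<le> m \<longrightarrow> y a \<noteq> k)}"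

definition Lk :: "nat \<Rightarrow> nat \<Rightarrow> int" where
  "Lk k m = int (k * (k - 1) div 2) - int m"

definition Q :: "nat \<Rightarrow> nat \<Rightarrow> nat \<Rightarrow> hecke" where
  "Q N k m = (\<lambda>y. if y \<in> Dset N k m then lmono (Lk k m - int (len N y)) else 0)"

lemma fixk_pos:
  assumes y: "y \<in> Wgrp N" and k: "1 \<le> k" "k \<le> Suc N" and f: "\<forall>a. k < a \<longrightarrow> y a = a"
  obtains p where "1 \<le> p" "p \<le> k" "y p = k"
proof -
  obtain p where p: "p \<in> {1..Suc N}" "y p = k" using W_preimage[OF y, of k] k by auto
  have "p \<le> k" using f p by (metis less_irrefl not_le_imp_less)
  then show ?thesis using that p by auto
qed

lemma fixk_range:
  assumes y: "y \<in> Wgrp N" and k: "k \<le> Suc N" and f: "\<forall>a. k < a \<longrightarrow> y a = a"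
    and a: "1 \<le> a" "a \<le> k"
  shows "1 \<le> y a \<and> y a \<le> k"
proof -
  have r: "y a \<in> {1..Suc N}" using W_range[OF y] a k by auto
  have "y a \<le> k"
  proof (rule ccontr)
    assume "\<not> y a \<le> k"
    then have "y (y a) = y a" using f by simp
    then have "y a = a" using W_inj[OF y] by (metis injD)
    then show False using \<open>\<not> y a \<le> k\<close> a by simp
  qed
  then show ?thesis using r by simp
qed

lemma D_iff_pos:
  assumes y: "y \<in> Wgrp N" and f: "\<forall>a. k < a \<longrightarrow> y a = a" and p: "1 \<le> p" "y p = k"
  shows "(y \<in> Dset N k m) = (m < p)"
proof -
  have "(\<forall>a. 1 \<le> a \<and> a \<le> m \<longrightarrow> y a \<noteq> k) = (m < p)"
  proof
    assume "\<forall>a. 1 \<le> a \<and> a \<le> m \<longrightarrow> y a \<noteq> k"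
    then show "m < p" using p by (metis not_le_imp_less)
  next
    assume mp: "m < p"
    show "\<forall>a. 1 \<le> a \<and> a \<le> m \<longrightarrow> y a \<noteq> k"
    proof (intro allI impI)
      fix a assume "1 \<le> a \<and> a \<le> m"
      then have "a \<noteq> p" using mp by auto
      then show "y a \<noteq> k" using p W_inj[OF y] by (metis injD)
    qed
  qed
  then show ?thesis using y f by (simp add: Dset_def)
qed

lemma D_W: "y \<in> Dset N k m \<Longrightarrow> y \<in> Wgrp N"
  by (simp add: Dset_def)

lemma D_fix: "y \<in> Dset N k m \<Longrightarrow> \<forall>a. k < a \<longrightarrow> y a = a"
  by (simp add: Dset_def)

lemma Lk_pred: "1 \<le> m \<Longrightarrow> Lk k (m - 1) = Lk k m + 1"
  by (simp add: Lk_def of_nat_diff)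

lemma Lk_suc: "Lk k (Suc m) = Lk k m - 1"
  by (simp add: Lk_def)

lemma mono_simps: "fls_X * lmono a = lmono (a + 1)" "fls_X_inv * lmono a = lmono (a - 1)"
  by (simp_all add: X_mono Xinv_mono mono_mult algebra_simps)

lemma sref_at1: "sref m m = Suc m" by (simp add: sref_def)
lemma sref_at2: "sref m (Suc m) = m" by (simp add: sref_def)
lemma sref_other: "a \<noteq> m \<Longrightarrow> a \<noteq> Suc m \<Longrightarrow> sref m a = a" by (simp add: sref_def)

lemma Q_rec:
  assumes m: "1 \<le> m" "m < k" and k: "k \<le> Suc N"
  shows "Bop N m (Q N k m) = hadd (Q N k (m - 1)) (Q N k (Suc m))"
proof (rule ext)
  fix z
  have mN: "m \<le> N" using m k by simp
  let ?s = "sref m"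
  let ?L = "Lk k m"
  show "Bop N m (Q N k m) z = hadd (Q N k (m - 1)) (Q N k (Suc m)) z"
  proof (cases "z \<in> Wgrp N \<and> (\<forall>a. k < a \<longrightarrow> z a = a)")
    case False
    have fz: "(\<forall>a. k < a \<longrightarrow> (z \<circ> ?s) a = a) = (\<forall>a. k < a \<longrightarrow> z a = a)"
      using m by (auto simp: sref_other)
    have "z \<circ> ?s \<notin> Dset N k m" using False fz W_comp_sref_iff[OF m(1) mN] by (auto simp: Dset_def)
    moreover have "\<And>m'. z \<notin> Dset N k m'" using False by (auto simp: Dset_def)
    ultimately show ?thesis by (simp add: Bop_apply Q_def hadd_def)
  next
    case True
    then have z: "z \<in> Wgrp N" and fz: "\<forall>a. k < a \<longrightarrow> z a = a" by auto
    have k1: "1 \<le> k" using m by simp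
    obtain p where p: "1 \<le> p" "p \<le> k" "z p = k" using fixk_pos[OF z k1 k fz] by blast
    have zs: "z \<circ> ?s \<in> Wgrp N" using W_comp[OF z sref_W[OF m(1) mN]] .
    have fzs: "\<forall>a. k < a \<longrightarrow> (z \<circ> ?s) a = a" using fz m by (auto simp: sref_other)
    have sp1: "1 \<le> ?s p"
      by (cases "p = m"; cases "p = Suc m") (use p m in \<open>simp_all add: sref_at1 sref_at2 sref_other\<close>)
    have sp: "1 \<le> ?s p" "(z \<circ> ?s) (?s p) = k" using sp1 p by auto
    have memz: "\<And>m'. (z \<in> Dset N k m') = (m' < p)" using D_iff_pos[OF z fz p(1,3)] .
    have memzs: "(z \<circ> ?s \<in> Dset N k m) = (m < ?s p)" using D_iff_pos[OF zs fzs sp] .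
    have ne: "z m \<noteq> z (Suc m)" using W_inj[OF z] by (metis injD n_not_Suc_n)
    have LA: "(z m < z (Suc m) \<and> len N (z \<circ> ?s) = Suc (len N z)) \<or>
              (z (Suc m) < z m \<and> len N z = Suc (len N (z \<circ> ?s)))"
      using len_adj_cases[OF m(1) mN, of z] ne by auto
    have Lp: "Lk k (m - 1) = ?L + 1" using Lk_pred[OF m(1)] .
    have Ls: "Lk k (Suc m) = ?L - 1" using Lk_suc .
    show ?thesis
    proof (cases "Suc m < p")
      case True
      have sp': "?s p = p" using True by (intro sref_other) auto
      have mem: "z \<in> Dset N k m" "z \<in> Dset N k (m - 1)" "z \<in> Dset N k (Suc m)" "z \<circ> ?s \<in> Dset N k m"
        using memz memzs sp' True by auto
      have q0: "Q N k m z = lmono (?L - int (len N z))" using mem by (simp add: Q_def)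
      have q0s: "Q N k m (z \<circ> ?s) = lmono (?L - int (len N (z \<circ> ?s)))" using mem by (simp add: Q_def)
      have q1: "Q N k (m - 1) z = lmono (?L + 1 - int (len N z))" using mem Lp by (simp add: Q_def)
      have q2: "Q N k (Suc m) z = lmono (?L - 1 - int (len N z))" using mem by (simp add: Q_def Ls)
      from LA show ?thesis
      proof
        assume a: "z m < z (Suc m) \<and> len N (z \<circ> ?s) = Suc (len N z)"
        then show ?thesis unfolding Bop_apply hadd_def q0 q0s q1 q2
          by (simp add: mono_simps algebra_simps)
      next
        assume a: "z (Suc m) < z m \<and> len N z = Suc (len N (z \<circ> ?s))"
        then show ?thesis unfolding Bop_apply hadd_def q0 q0s q1 q2
          by (simp add: mono_simps algebra_simps)
      qed
    next
      case False
      show ?thesis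
      proof (cases "p = Suc m")
        case True
        have sp': "?s p = m" using True by (simp add: sref_at2)
        have mem: "z \<in> Dset N k m" "z \<in> Dset N k (m - 1)" "z \<notin> Dset N k (Suc m)" "z \<circ> ?s \<notin> Dset N k m"
          using memz memzs sp' True by auto
        have "z m \<le> k" using fixk_range[OF z k fz, of m] m by simp
        moreover have "z m \<noteq> k" using p True W_inj[OF z] by (metis injD n_not_Suc_n)
        ultimately have "z m < z (Suc m)" using p True by simp
        then have a: "len N (z \<circ> ?s) = Suc (len N z)" using LA by auto
        show ?thesis unfolding Bop_apply Q_def hadd_def using mem Lp a
          by (simp add: mono_simps algebra_simps)
      next
        case False2: False
        show ?thesis
        proof (cases "p = m")
          case True
          have sp': "?s p = Suc m" using True by (simp add: sref_at1)
          have mem: "z \<notin> Dset N k m" "z \<in> Dset N k (m - 1)" "z \<notin> Dset N k (Suc m)" "z \<circ> ?s \<in> Dset N k m"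
            using memz memzs sp' True m by auto
          have "z (Suc m) \<le> k" using fixk_range[OF z k fz, of "Suc m"] m by simp
          moreover have "z (Suc m) \<noteq> k" using p True W_inj[OF z] by (metis injD n_not_Suc_n)
          ultimately have "z (Suc m) < z m" using p True by simp
          then have a: "len N z = Suc (len N (z \<circ> ?s))" using LA by auto
          show ?thesis unfolding Bop_apply Q_def hadd_def using mem Lp a
            by (simp add: mono_simps algebra_simps)
        next
          case False3: False
          have pm: "p < m" using False False2 False3 by simp
          have sp': "?s p = p" using pm by (intro sref_other) auto
          have mem: "z \<notin> Dset N k m" "z \<notin> Dset N k (m - 1)" "z \<notin> Dset N k (Suc m)" "z \<circ> ?s \<notin> Dset N k m"
            using memz memzs sp' pm by auto
          show ?thesis unfolding Bop_apply Q_def hadd_def using mem by simp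
        qed
      qed
    qed
  qed
qed

lemma Q_desc:
  assumes m: "m \<le> N" and j: "1 \<le> j" "j \<le> N" and jm: "j \<noteq> m"
  shows "Bop N j (Q N (Suc N) m) = hscale (fls_X + fls_X_inv) (Q N (Suc N) m)"
proof (rule ext)
  fix z
  let ?s = "sref j"
  let ?L = "Lk (Suc N) m"
  show "Bop N j (Q N (Suc N) m) z = hscale (fls_X + fls_X_inv) (Q N (Suc N) m) z"
  proof (cases "z \<in> Wgrp N")
    case False
    have "z \<circ> ?s \<notin> Wgrp N" using False W_comp_sref_iff[OF j] by blast
    then have "z \<circ> ?s \<notin> Dset N (Suc N) m" "z \<notin> Dset N (Suc N) m" using False D_W by blast+
    then show ?thesis by (simp add: Bop_apply Q_def hscale_def)
  next
    case True
    note z = True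
    have fz: "\<forall>a. Suc N < a \<longrightarrow> z a = a" using W_out[OF z] by auto
    have zs: "z \<circ> ?s \<in> Wgrp N" using W_comp[OF z sref_W[OF j]] .
    have fzs: "\<forall>a. Suc N < a \<longrightarrow> (z \<circ> ?s) a = a" using W_out[OF zs] by auto
    obtain p where p: "1 \<le> p" "p \<le> Suc N" "z p = Suc N" using fixk_pos[OF z _ _ fz] by auto
    have sp1: "1 \<le> ?s p"
      by (cases "p = j"; cases "p = Suc j") (use p j in \<open>simp_all add: sref_at1 sref_at2 sref_other\<close>)
    have sp: "(z \<circ> ?s) (?s p) = Suc N" using p by simp
    have memz: "(z \<in> Dset N (Suc N) m) = (m < p)" using D_iff_pos[OF z fz p(1,3)] .
    have memzs: "(z \<circ> ?s \<in> Dset N (Suc N) m) = (m < ?s p)" using D_iff_pos[OF zs fzs sp1 sp] .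
    have spm: "(m < ?s p) = (m < p)"
      by (cases "p = j"; cases "p = Suc j") (use jm in \<open>simp_all add: sref_at1 sref_at2 sref_other less_Suc_eq\<close>)
    have ne: "z j \<noteq> z (Suc j)" using W_inj[OF z] by (metis injD n_not_Suc_n)
    have LA: "len N (z \<circ> ?s) = Suc (len N z) \<or> len N z = Suc (len N (z \<circ> ?s))"
      using len_adj_cases[OF j, of z] ne by auto
    show ?thesis
    proof (cases "m < p")
      case True
      have q0: "Q N (Suc N) m z = lmono (?L - int (len N z))" using memz True by (simp add: Q_def)
      have q0s: "Q N (Suc N) m (z \<circ> ?s) = lmono (?L - int (len N (z \<circ> ?s)))"
        using memzs spm True by (simp add: Q_def)
      from LA show ?thesis
      proof
        assume a: "len N (z \<circ> ?s) = Suc (len N z)"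
        have c: "(len N (z \<circ> ?s) < len N z) = False" using a by simp
        show ?thesis unfolding Bop_apply hscale_def q0 q0s c a
          by (simp add: mono_simps distrib_right algebra_simps)
      next
        assume a: "len N z = Suc (len N (z \<circ> ?s))"
        have c: "(len N (z \<circ> ?s) < len N z) = True" using a by simp
        show ?thesis unfolding Bop_apply hscale_def q0 q0s c a
          by (simp add: mono_simps distrib_right algebra_simps)
      qed
    next
      case False
      have q0: "Q N (Suc N) m z = 0" using memz False by (simp add: Q_def)
      have q0s: "Q N (Suc N) m (z \<circ> ?s) = 0" using memzs spm False by (simp add: Q_def)
      show ?thesis unfolding Bop_apply hscale_def q0 q0s by simp
    qed
  qed
qed

lemma D_shift:
  assumes k: "1 \<le> k" "k \<le> N"
  shows "Dset N k 0 = Dset N (Suc k) k"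
proof (rule set_eqI, rule iffI)
  fix y assume y: "y \<in> Dset N k 0"
  then have yW: "y \<in> Wgrp N" and f: "\<forall>a. k < a \<longrightarrow> y a = a" by (auto simp: Dset_def)
  have yk: "y (Suc k) = Suc k" using f by simp
  have "\<forall>a. 1 \<le> a \<and> a \<le> k \<longrightarrow> y a \<noteq> Suc k"
  proof (intro allI impI)
    fix a assume a: "1 \<le> a \<and> a \<le> k"
    show "y a \<noteq> Suc k"
    proof
      assume "y a = Suc k"
      then have "y a = y (Suc k)" using yk by simp
      then have "a = Suc k" using W_inj[OF yW] by (metis injD)
      then show False using a by simp
    qed
  qed
  then show "y \<in> Dset N (Suc k) k" using yW f by (auto simp: Dset_def)
next
  fix y assume y: "y \<in> Dset N (Suc k) k"
  then have yW: "y \<in> Wgrp N" and f: "\<forall>a. Suc k < a \<longrightarrow> y a = a"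
    and g: "\<forall>a. 1 \<le> a \<and> a \<le> k \<longrightarrow> y a \<noteq> Suc k" by (auto simp: Dset_def)
  obtain p where p: "1 \<le> p" "p \<le> Suc k" "y p = Suc k" using fixk_pos[OF yW _ _ f] k by auto
  have "p = Suc k" using g p by (metis le_SucE)
  then have "y (Suc k) = Suc k" using p by simp
  then have "\<forall>a. k < a \<longrightarrow> y a = a" using f by (metis Suc_lessI)
  then show "y \<in> Dset N k 0" using yW by (simp add: Dset_def)
qed

lemma Lk_shift: "1 \<le> k \<Longrightarrow> Lk k 0 = Lk (Suc k) k"
proof -
  assume k: "1 \<le> k"
  have "Suc k * (Suc k - 1) = k * (k - 1) + 2 * k" using k by (cases k) (auto simp: algebra_simps)
  then have "Suc k * (Suc k - 1) div 2 = k * (k - 1) div 2 + k" by simp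
  then show ?thesis by (simp add: Lk_def)
qed

lemma Q_shift:
  assumes "1 \<le> k" "k \<le> N"
  shows "Q N k 0 = Q N (Suc k) k"
proof -
  have D: "Dset N k 0 = Dset N (Suc k) k" using D_shift[OF assms] .
  have L: "Lk k 0 = Lk (Suc k) k" using Lk_shift assms(1) by blast
  show ?thesis unfolding Q_def D L ..
qed

lemma Q_base: "Q N 1 0 = Hstd id"
proof (rule ext)
  fix y
  have "y \<in> Dset N 1 0 \<longleftrightarrow> y = id"
  proof
    assume y: "y \<in> Dset N 1 0"
    then have yW: "y \<in> Wgrp N" and f: "\<forall>a. 1 < a \<longrightarrow> y a = a" by (auto simp: Dset_def)
    obtain p where p: "1 \<le> p" "p \<le> 1" "y p = 1" using fixk_pos[OF yW _ _ f] by auto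
    have y1: "y 1 = 1" using p by simp
    have y0: "y 0 = 0" using W_out[OF yW, of 0] by simp
    show "y = id"
    proof (rule ext)
      fix a show "y a = id a" using f y1 y0 by (cases "a = 0"; cases "a = 1") auto
    qed
  next
    assume "y = id" then show "y \<in> Dset N 1 0" by (simp add: Dset_def W_id)
  qed
  then show "Q N 1 0 y = Hstd id y" by (auto simp: Q_def Hstd_def Lk_def mono_0)
qed

lemma Q_zero:
  assumes "1 \<le> k" "k \<le> Suc N"
  shows "Q N k k = (\<lambda>_. 0)"
proof (rule ext)
  fix y
  have "y \<notin> Dset N k k"
  proof
    assume y: "y \<in> Dset N k k"
    then have yW: "y \<in> Wgrp N" and f: "\<forall>a. k < a \<longrightarrow> y a = a"
      and g: "\<forall>a. 1 \<le> a \<and> a \<le> k \<longrightarrow> y a \<noteq> k" by (auto simp: Dset_def)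
    obtain p where "1 \<le> p" "p \<le> k" "y p = k" using fixk_pos[OF yW assms f] by blast
    then show False using g by blast
  qed
  then show "Q N k k y = 0" by (simp add: Q_def)
qed

lemma hsupp_Q: "hsupp N (Q N k m)"
  by (auto simp: hsupp_def Q_def D_W)

lemma hpoly_Q: "hpoly (Q N k m)"
  by (auto simp: hpoly_def Q_def lpoly_mono lpoly_0)

lemma hbar_zero: "hbar N (\<lambda>_. 0) = (\<lambda>_. 0)"
  by (simp add: hbar_def lbar_0)

lemma SD_step:
  assumes m: "1 \<le> m" "m < k" and k: "k \<le> Suc N"
    and h1: "hbar N (Q N k m) = Q N k m" and h2: "hbar N (Q N k (Suc m)) = Q N k (Suc m)"
  shows "hbar N (Q N k (m - 1)) = Q N k (m - 1)"
proof -
  have mN: "m \<le> N" using m k by simp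
  have "hbar N (Bop N m (Q N k m)) = Bop N m (hbar N (Q N k m))"
    by (rule hbar_Bop[OF hsupp_Q hpoly_Q m(1) mN])
  also have "\<dots> = hadd (Q N k (m - 1)) (Q N k (Suc m))" using h1 Q_rec[OF m k] by simp
  finally have A: "hbar N (hadd (Q N k (m - 1)) (Q N k (Suc m))) = hadd (Q N k (m - 1)) (Q N k (Suc m))"
    using Q_rec[OF m k] by simp
  have "hbar N (hadd (Q N k (m - 1)) (Q N k (Suc m))) = hadd (hbar N (Q N k (m - 1))) (Q N k (Suc m))"
    using hbar_hadd[OF hpoly_Q hpoly_Q] h2 by simp
  with A have "hadd (hbar N (Q N k (m - 1))) (Q N k (Suc m)) = hadd (Q N k (m - 1)) (Q N k (Suc m))" by simp
  then show ?thesis by (simp add: hadd_def fun_eq_iff)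
qed

lemma SD_all:
  "1 \<le> k \<Longrightarrow> k \<le> Suc N \<Longrightarrow> m \<le> k \<Longrightarrow> hbar N (Q N k m) = Q N k m"
proof (induction k arbitrary: m)
  case 0 then show ?case by simp
next
  case (Suc k')
  let ?K = "Suc k'"
  have main: "\<forall>d'. d' < d \<longrightarrow> d' \<le> ?K \<longrightarrow> hbar N (Q N ?K (?K - d')) = Q N ?K (?K - d')
        \<Longrightarrow> d \<le> ?K \<Longrightarrow> hbar N (Q N ?K (?K - d)) = Q N ?K (?K - d)" for d
  proof -
    assume IH: "\<forall>d'. d' < d \<longrightarrow> d' \<le> ?K \<longrightarrow> hbar N (Q N ?K (?K - d')) = Q N ?K (?K - d')"
      and d: "d \<le> ?K"
    show ?thesis
    proof (cases "d = 0")
      case True then show ?thesis using Q_zero[of ?K N] Suc.prems hbar_zero by simp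
    next
      case False
      show ?thesis
      proof (cases "d = 1")
        case True
        show ?thesis
        proof (cases "k' = 0")
          case True
          then show ?thesis using \<open>d = 1\<close> Q_base hbar_Hstd_id by simp
        next
          case False
          have e: "Q N ?K (?K - d) = Q N k' 0" using Q_shift[of k' N] False Suc.prems \<open>d = 1\<close> by simp
          have "hbar N (Q N k' 0) = Q N k' 0" using Suc.IH[of 0] False Suc.prems by simp
          then show ?thesis using e by simp
        qed
      next
        case False2: False
        let ?m = "Suc (?K - d)"
        have m1: "1 \<le> ?m" "?m < ?K" using False False2 d by auto
        have h1: "hbar N (Q N ?K ?m) = Q N ?K ?m"
          using IH[rule_format, of "d - 1"] False d by (simp add: Suc_diff_le)
        have h2: "hbar N (Q N ?K (Suc ?m)) = Q N ?K (Suc ?m)"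
          using IH[rule_format, of "d - 2"] False False2 d
          by (simp add: Suc_diff_le numeral_2_eq_2)
        have "hbar N (Q N ?K (?m - 1)) = Q N ?K (?m - 1)"
          by (rule SD_step[OF m1 Suc.prems(2) h1 h2])
        then show ?thesis by simp
      qed
    qed
  qed
  have all: "\<And>d. d \<le> ?K \<Longrightarrow> hbar N (Q N ?K (?K - d)) = Q N ?K (?K - d)"
  proof -
    fix d show "d \<le> ?K \<Longrightarrow> hbar N (Q N ?K (?K - d)) = Q N ?K (?K - d)"
    proof (induction d rule: less_induct)
      case (less d)
      show ?case using main[of d] less by blast
    qed
  qed
  show ?case using all[of "?K - m"] Suc.prems by simp
qed

definition ek :: "nat \<Rightarrow> nat \<Rightarrow> perm" where
  "ek k m a = (if a < 1 \<or> k < a then a else if a \<le> m then k - a else if a = Suc m then k else Suc k - a)"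

lemma ek_1: "ek 1 0 = id"
proof (rule ext)
  fix a show "ek 1 0 a = id a" by (cases "a = 0"; cases "a = 1") (simp_all add: ek_def)
qed

lemma ek_step:
  assumes "1 \<le> m" "m < k"
  shows "ek k m \<circ> sref m = ek k (m - 1)"
proof (rule ext)
  fix a
  show "(ek k m \<circ> sref m) a = ek k (m - 1) a"
  proof (cases "a = m")
    case True then show ?thesis using assms by (simp add: sref_at1 ek_def)
  next
    case False
    show ?thesis
    proof (cases "a = Suc m")
      case True then show ?thesis using assms by (simp add: sref_at2 ek_def)
    next
      case False2: False
      then show ?thesis using False assms by (simp add: sref_other ek_def)
    qed
  qed
qed

lemma ek_top: "2 \<le> k \<Longrightarrow> ek k (k - 1) = ek (k - 1) 0"
  by (rule ext) (auto simp: ek_def)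

lemma ek_lt: "1 \<le> m \<Longrightarrow> m < k \<Longrightarrow> ek k m m < ek k m (Suc m)"
  by (simp add: ek_def)

lemma ek_W_len:
  assumes k: "1 \<le> k" "k \<le> Suc N" and m: "m < k"
  shows "ek k m \<in> Wgrp N \<and> int (len N (ek k m)) = Lk k m"
  using k m
proof (induction k arbitrary: m)
  case 0 then show ?case by simp
next
  case (Suc k')
  let ?K = "Suc k'"
  have all: "d < ?K \<Longrightarrow> ek ?K (k' - d) \<in> Wgrp N \<and> int (len N (ek ?K (k' - d))) = Lk ?K (k' - d)" for d
  proof (induction d)
    case 0
    show ?case
    proof (cases "k' = 0")
      case True
      have e: "ek ?K (k' - 0) = id" using True ek_1 by simp
      show ?thesis unfolding e
      proof (rule conjI)
        show "id \<in> Wgrp N" by (rule W_id)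
        show "int (len N id) = Lk ?K (k' - 0)" using True by (simp add: Lk_def)
      qed
    next
      case False
      have e: "ek ?K k' = ek k' 0" using ek_top[of ?K] False by simp
      have "ek k' 0 \<in> Wgrp N \<and> int (len N (ek k' 0)) = Lk k' 0"
        using Suc.IH[of 0] False Suc.prems by simp
      then show ?thesis using e Lk_shift[of k'] False by simp
    qed
  next
    case (Suc d)
    let ?m = "k' - d"
    have d: "d < ?K" using Suc.prems by simp
    have IH: "ek ?K ?m \<in> Wgrp N \<and> int (len N (ek ?K ?m)) = Lk ?K ?m" using Suc.IH[OF d] .
    have m1: "1 \<le> ?m" "?m < ?K" using Suc.prems by auto
    have mN: "?m \<le> N" using m1 Suc.prems(1) \<open>Suc k' \<le> Suc N\<close> by simp
    have e: "ek ?K ?m \<circ> sref ?m = ek ?K (?m - 1)" by (rule ek_step[OF m1])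
    have l: "len N (ek ?K ?m \<circ> sref ?m) = Suc (len N (ek ?K ?m))"
      by (rule len_adj_up[OF m1(1) mN ek_lt[OF m1]])
    have W: "ek ?K (?m - 1) \<in> Wgrp N" using e W_comp[OF conjunct1[OF IH] sref_W[OF m1(1) mN]] by simp
    have "?m - 1 = k' - Suc d" by simp
    moreover have "int (len N (ek ?K (?m - 1))) = Lk ?K (?m - 1)"
      using e l IH Lk_pred[OF m1(1), of ?K] by simp
    ultimately show ?case using W by simp
  qed
  show ?case using all[of "k' - m"] Suc.prems by simp
qed

lemma ek_val: "1 \<le> a \<Longrightarrow> a \<le> k \<Longrightarrow> ek k m a = (if a \<le> m then k - a else if a = Suc m then k else Suc k - a)"
  by (simp add: ek_def)

lemma ek_out: "a < 1 \<or> k < a \<Longrightarrow> ek k m a = a"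
  by (simp add: ek_def)

lemma rev_rev: "ek (Suc N) N \<circ> ek (Suc N) N = id"
proof (rule ext)
  fix a show "(ek (Suc N) N \<circ> ek (Suc N) N) a = id a"
    by (cases "1 \<le> a \<and> a \<le> Suc N") (auto simp: ek_def)
qed

lemma parab_W: "u \<in> parab N \<Longrightarrow> u \<in> Wgrp (N - 1)"
  unfolding parab_def using wordprod_W by blast

lemma Inv_parab_sub:
  assumes N: "1 \<le> N" and u: "u \<in> Wgrp (N - 1)"
  shows "Inv N u \<subseteq> Inv N (ek (Suc N) N)"
proof
  fix r assume r: "r \<in> Inv N u"
  obtain a b where ab: "r = (a, b)" by (cases r)
  have h: "1 \<le> a" "a < b" "b \<le> Suc N" "u b < u a" using r ab by (auto simp: Inv_def)
  have SN: "Suc (N - 1) = N" using N by simp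
  have bN: "b \<le> N"
  proof (rule ccontr)
    assume "\<not> b \<le> N"
    then have "b = Suc N" using h by simp
    then have "u b = Suc N" using W_out[OF u, of b] SN by simp
    moreover have "u a \<le> N" using W_range[OF u, of a] h \<open>b = Suc N\<close> SN by simp
    ultimately show False using h by simp
  qed
  have "ek (Suc N) N b < ek (Suc N) N a" using h bN by (simp add: ek_def)
  then show "r \<in> Inv N (ek (Suc N) N)" using ab h by (simp add: Inv_def)
qed

lemma wI_eq:
  assumes N: "1 \<le> N"
  shows "wI N = ek (Suc N) N"
proof -
  let ?r = "ek (Suc N) N"
  have SN: "Suc (N - 1) = N" using N by simp
  have rtop: "?r = ek N 0" using ek_top[of "Suc N"] N by simp
  have rW: "?r \<in> Wgrp (N - 1)" using ek_W_len[of N "N - 1" 0] N SN rtop by simp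
  have rP: "?r \<in> parab N"
  proof -
    have "\<exists>ws. ?r = wordprod ws \<and> set ws \<subseteq> {1..N - 1}" using red_exists[OF rW] by metis
    then show ?thesis by (simp add: parab_def)
  qed
  have rmax: "\<forall>u\<in>parab N. len N u \<le> len N ?r"
  proof
    fix u assume "u \<in> parab N"
    then have "Inv N u \<subseteq> Inv N ?r" using Inv_parab_sub[OF N parab_W] by blast
    then show "len N u \<le> len N ?r" using fin_Inv by (simp add: len_Inv card_mono)
  qed
  show ?thesis unfolding wI_def
  proof (rule the_equality)
    show "?r \<in> parab N \<and> (\<forall>u\<in>parab N. len N u \<le> len N ?r)" using rP rmax by blast
  next
    fix w assume w: "w \<in> parab N \<and> (\<forall>u\<in>parab N. len N u \<le> len N w)"
    have wW: "w \<in> Wgrp (N - 1)" using w parab_W by blast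
    have sub: "Inv N w \<subseteq> Inv N ?r" using Inv_parab_sub[OF N wW] .
    have "len N ?r \<le> len N w" using w rP by blast
    then have c2: "card (Inv N ?r) \<le> card (Inv N w)" by (simp add: len_Inv)
    have c1: "card (Inv N w) \<le> card (Inv N ?r)" using card_mono[OF fin_Inv sub] .
    have eqI: "Inv N w = Inv N ?r" by (rule card_subset_eq[OF fin_Inv sub]) (use c1 c2 in linarith)
    have dec: "w b < w a" if "1 \<le> a" "a < b" "b \<le> N" for a b
    proof -
      have "(a, b) \<in> Inv N ?r" using that by (simp add: Inv_def ek_def)
      then have "(a, b) \<in> Inv N w" using eqI by blast
      then show ?thesis by (simp add: Inv_def)
    qed
    have cW: "w \<circ> ?r \<in> Wgrp (N - 1)" by (rule W_comp[OF wW rW])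
    have "Inv (N - 1) (w \<circ> ?r) = {}"
    proof -
      have "\<not> (w (?r b) < w (?r a))" if "1 \<le> a" "a < b" "b \<le> N" for a b
      proof -
        have "?r b < ?r a" "1 \<le> ?r b" "?r a \<le> N" using that by (simp_all add: ek_def)
        then have "w (?r a) < w (?r b)" using dec by simp
        then show ?thesis by simp
      qed
      then show ?thesis using SN by (auto simp: Inv_def)
    qed
    then have "len (N - 1) (w \<circ> ?r) = 0" by (simp add: len_Inv)
    then have "w \<circ> ?r = id" using len0_id[OF cW] by simp
    then have "w \<circ> ?r \<circ> ?r = ?r" by simp
    then show "w = ?r" using rev_rev by (simp add: comp_assoc)
  qed
qed

lemma hsuf_N: "hsuf N N = id"
  by (simp add: hsuf_def)

lemma hsuf_step: "m < N \<Longrightarrow> hsuf N m = hsuf N (Suc m) \<circ> sref (Suc m)"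
proof -
  assume "m < N"
  then have "[Suc m..<Suc N] = Suc m # [Suc (Suc m)..<Suc N]" by (simp add: upt_conv_Cons)
  then show ?thesis by (simp add: hsuf_def)
qed

lemma w_eq:
  assumes N: "1 \<le> N" and m: "m \<le> N"
  shows "wI N \<circ> hsuf N m = ek (Suc N) m"
proof -
  have "wI N \<circ> hsuf N (N - d) = ek (Suc N) (N - d)" if "d \<le> N" for d
    using that
  proof (induction d)
    case 0 then show ?case using wI_eq[OF N] by (simp add: hsuf_N)
  next
    case (Suc d)
    let ?m = "N - Suc d"
    have e: "N - d = Suc ?m" using Suc.prems by simp
    have IH0: "wI N \<circ> hsuf N (N - d) = ek (Suc N) (N - d)" by (rule Suc.IH) (use Suc.prems in simp)
    have IH: "wI N \<circ> hsuf N (Suc ?m) = ek (Suc N) (Suc ?m)" using IH0 unfolding e .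
    have "wI N \<circ> hsuf N ?m = (wI N \<circ> hsuf N (Suc ?m)) \<circ> sref (Suc ?m)"
      using hsuf_step[of ?m N] Suc.prems by (simp add: comp_assoc)
    also have "\<dots> = ek (Suc N) (Suc ?m) \<circ> sref (Suc ?m)" using IH by simp
    also have "\<dots> = ek (Suc N) ?m" using ek_step[of "Suc ?m" "Suc N"] Suc.prems by simp
    finally show ?case .
  qed
  from this[of "N - m"] m show ?thesis by simp
qed

definition pc :: "nat \<Rightarrow> nat \<Rightarrow> perm \<Rightarrow> bool" where
  "pc N m y \<longleftrightarrow> (\<forall>a. 1 \<le> a \<and> a \<le> m \<longrightarrow> y a \<noteq> Suc N)"

definition Rel :: "nat \<Rightarrow> (perm \<times> perm) set" where
  "Rel N = {(y, y \<circ> Transposition.transpose i j) | y i j.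
                 y \<in> Wgrp N \<and> 1 \<le> i \<and> i < j \<and> j \<le> Suc N \<and>
                 len N y < len N (y \<circ> Transposition.transpose i j)}"

lemma bruhat_Rel: "bruhat_le N x w \<longleftrightarrow> x \<in> Wgrp N \<and> (x, w) \<in> (Rel N)\<^sup>*"
  by (simp add: bruhat_le_def Rel_def)

lemma D_top: "Dset N (Suc N) m = {y \<in> Wgrp N. pc N m y}"
  by (auto simp: Dset_def pc_def W_out)

lemma pc_ek: "pc N m (ek (Suc N) m)"
  unfolding pc_def
proof (intro allI impI)
  fix a assume a: "1 \<le> a \<and> a \<le> m"
  show "ek (Suc N) m a \<noteq> Suc N"
  proof (cases "Suc N < a")
    case True then show ?thesis by (simp add: ek_def)
  next
    case False
    then have "ek (Suc N) m a = Suc N - a" using a by (simp add: ek_def)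
    then show ?thesis using a by arith
  qed
qed

lemma bruhat_down:
  assumes r: "(y, w') \<in> (Rel N)\<^sup>*" and p: "pc N m w'"
  shows "pc N m y \<and> (y = w' \<or> len N y < len N w')"
  using r
proof (induction rule: converse_rtrancl_induct)
  case base then show ?case using p by simp
next
  case (step y z)
  from step.hyps(1) obtain i j where z: "z = y \<circ> Transposition.transpose i j" and yW: "y \<in> Wgrp N"
    and ij: "1 \<le> i" "i < j" "j \<le> Suc N" and l: "len N y < len N z"
    unfolding Rel_def by blast
  have pz: "pc N m z" and lz: "z = w' \<or> len N z < len N w'" using step.IH by auto
  have "len N y < len N w'" using l lz by auto
  moreover have "pc N m y"
    unfolding pc_def
  proof (intro allI impI notI)
    fix a assume a: "1 \<le> a \<and> a \<le> m" and ya: "y a = Suc N"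
    show False
    proof (cases "a = i")
      case True
      have "y j \<noteq> Suc N" using ya True ij W_inj[OF yW] by (metis injD less_irrefl)
      moreover have "y j \<le> Suc N" using W_range[OF yW, of j] ij by simp
      ultimately have "y j < y i" using ya True by simp
      then have "len N z < len N y" unfolding z by (rule len_transp_down[OF ij])
      then show False using l by simp
    next
      case False
      show False
      proof (cases "a = j")
        case True
        have "z i = Suc N" using z ya True by simp
        then show False using pz ij a True unfolding pc_def by auto
      next
        case False2: False
        have "z a = Suc N" using z ya False False2 by simp
        then show False using pz a unfolding pc_def by auto
      qed
    qed
  qed
  ultimately show ?case by simp
qed

lemma ek_hit:
  assumes k: "1 \<le> k" "k \<le> Suc N" and m: "m \<le> N" and v: "ek (Suc N) m k < v" "v \<le> Suc N"
    and vk: "k \<le> m \<longrightarrow> v \<noteq> Suc N"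
  shows "\<exists>a. 1 \<le> a \<and> a < k \<and> ek (Suc N) m a = v"
proof (cases "k \<le> m")
  case True
  have ekk: "ek (Suc N) m k = Suc N - k" using True k by (simp add: ek_def)
  have vN: "v \<le> N" using vk True v by simp
  let ?a = "Suc N - v"
  have a: "1 \<le> ?a" "?a < k" "?a \<le> m" using vN v ekk True by auto
  have "ek (Suc N) m ?a = v" using a vN by (simp add: ek_def)
  then show ?thesis using a by blast
next
  case False
  show ?thesis
  proof (cases "k = Suc m")
    case True
    then have "ek (Suc N) m k = Suc N" using k by (simp add: ek_def)
    then show ?thesis using v by simp
  next
    case False2: False
    have km: "Suc m < k" using False False2 by simp
    have ekk: "ek (Suc N) m k = Suc (Suc N) - k" using km k by (simp add: ek_def)
    show ?thesis
    proof (cases "v = Suc N")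
      case True
      have "ek (Suc N) m (Suc m) = Suc N" using m by (simp add: ek_def)
      then show ?thesis using True km by (intro exI[of _ "Suc m"]) simp
    next
      case vne: False
      show ?thesis
      proof (cases "Suc N - m \<le> v")
        case True
        let ?a = "Suc N - v"
        have a: "1 \<le> ?a" "?a \<le> m" using True vne v by auto
        have "?a < k" using a km by simp
        moreover have "ek (Suc N) m ?a = v" using a v vne by (simp add: ek_def)
        ultimately show ?thesis using a by blast
      next
        case False
        let ?a = "Suc (Suc N) - v"
        have a: "Suc m < ?a" "?a < k" "?a \<le> Suc N" using False v ekk km k by auto
        have "ek (Suc N) m ?a = Suc (Suc N) - ?a" using a by (simp add: ek_def)
        also have "\<dots> = v" using a v by simp
        finally show ?thesis using a by (intro exI[of _ ?a]) simp
      qed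
    qed
  qed
qed

lemma len_bound: "len N y \<le> Suc N * Suc N"
proof -
  have "Inv N y \<subseteq> {1..Suc N} \<times> {1..Suc N}" by (auto simp: Inv_def)
  then have "card (Inv N y) \<le> card ({1..Suc N} \<times> {1..Suc N})" by (rule card_mono[rotated]) simp
  then show ?thesis by (simp add: len_Inv card_cartesian_product)
qed

lemma transp_W: "1 \<le> i \<Longrightarrow> i \<le> Suc N \<Longrightarrow> 1 \<le> j \<Longrightarrow> j \<le> Suc N \<Longrightarrow> Transposition.transpose i j \<in> Wgrp N"
  unfolding Wgrp_def by (auto intro!: permutes_swap_id)

lemma Rel_intro:
  assumes "y \<in> Wgrp N" "1 \<le> i" "i < j" "j \<le> Suc N"
    "len N y < len N (y \<circ> Transposition.transpose i j)"
  shows "(y, y \<circ> Transposition.transpose i j) \<in> Rel N"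
  unfolding Rel_def
  apply (rule CollectI)
  apply (rule exI[where x=y])
  apply (rule exI[where x=i])
  apply (rule exI[where x=j])
  using assms by simp

lemma bruhat_up:
  assumes m: "m \<le> N" and y: "y \<in> Wgrp N" and py: "pc N m y"
  shows "(y, ek (Suc N) m) \<in> (Rel N)\<^sup>*"
  using y py
proof (induction "Suc N * Suc N - len N y" arbitrary: y rule: less_induct)
  case less
  let ?w = "ek (Suc N) m"
  have wW: "?w \<in> Wgrp N" using ek_W_len[of "Suc N" N m] m by simp
  show ?case
  proof (cases "y = ?w")
    case True then show ?thesis by simp
  next
    case False
    then have ex: "\<exists>k. y k \<noteq> ?w k" by (auto simp: fun_eq_iff)
    define k where "k = (LEAST k. y k \<noteq> ?w k)"
    have yk: "y k \<noteq> ?w k" unfolding k_def by (rule LeastI_ex[OF ex])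
    have below: "\<And>a. a < k \<Longrightarrow> y a = ?w a" unfolding k_def using not_less_Least by blast
    have k1: "1 \<le> k"
    proof (rule ccontr)
      assume "\<not> 1 \<le> k"
      then have "k = 0" by simp
      then show False using yk W_out[OF less.prems(1), of 0] by (simp add: ek_def)
    qed
    have k2: "k \<le> Suc N"
    proof (rule ccontr)
      assume "\<not> k \<le> Suc N"
      then show False using yk W_out[OF less.prems(1), of k] by (simp add: ek_def)
    qed
    have ykr: "y k \<le> Suc N" using W_range[OF less.prems(1), of k] k1 k2 by simp
    have lt: "y k < ?w k"
    proof (rule ccontr)
      assume "\<not> y k < ?w k"
      then have gt: "?w k < y k" using yk by simp
      have "k \<le> m \<longrightarrow> y k \<noteq> Suc N" using less.prems(2) k1 by (simp add: pc_def)
      then obtain a where a: "1 \<le> a" "a < k" "?w a = y k" using ek_hit[OF k1 k2 m gt ykr] by blast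
      then have "y a = y k" using below by simp
      then have "a = k" using W_inj[OF less.prems(1)] by (metis injD)
      then show False using a by simp
    qed
    have wkr: "?w k \<in> {1..Suc N}" using W_range[OF wW, of k] k1 k2 by simp
    obtain j where j: "j \<in> {1..Suc N}" "y j = ?w k" using W_preimage[OF less.prems(1) wkr] by blast
    have jk: "k < j"
    proof (rule ccontr)
      assume "\<not> k < j"
      moreover have "j \<noteq> k" using j yk by auto
      ultimately have "j < k" by simp
      then have "?w j = ?w k" using below j by simp
      then have "j = k" using W_inj[OF wW] by (metis injD)
      then show False using \<open>j \<noteq> k\<close> by simp
    qed
    let ?t = "Transposition.transpose k j"
    let ?y = "y \<circ> ?t"
    have yyW: "?y \<in> Wgrp N" using W_comp[OF less.prems(1) transp_W] k1 k2 j by simp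
    have ll: "len N y < len N ?y" using len_transp_up[of k j N y] k1 jk j lt by simp
    have pyy: "pc N m ?y"
      unfolding pc_def
    proof (intro allI impI)
      fix a assume a: "1 \<le> a \<and> a \<le> m"
      show "?y a \<noteq> Suc N"
      proof (cases "a = k")
        case True
        have "?w k = Suc N - k" using True a k1 k2 by (simp add: ek_def)
        then have "?w k \<noteq> Suc N" using k1 by arith
        then show ?thesis using True j by simp
      next
        case False
        show ?thesis
        proof (cases "a = j")
          case True
          have "y k \<noteq> Suc N" using less.prems(2) k1 jk a True by (simp add: pc_def)
          then show ?thesis using True by simp
        next
          case False2: False
          then show ?thesis using False less.prems(2) a by (simp add: pc_def)
        qed
      qed
    qed
    have "Suc N * Suc N - len N ?y < Suc N * Suc N - len N y"
      using ll len_bound[of N ?y] by simp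
    then have "(?y, ?w) \<in> (Rel N)\<^sup>*" by (rule less.hyps[OF _ yyW pyy])
    moreover have "(y, ?y) \<in> Rel N"
      by (rule Rel_intro) (use less.prems(1) k1 jk j ll in auto)
    ultimately show ?thesis by (rule converse_rtrancl_into_rtrancl[rotated])
  qed
qed

lemma bruhat_char:
  assumes m: "m \<le> N"
  shows "bruhat_le N y (ek (Suc N) m) \<longleftrightarrow> y \<in> Dset N (Suc N) m"
proof
  assume "bruhat_le N y (ek (Suc N) m)"
  then have "y \<in> Wgrp N" "(y, ek (Suc N) m) \<in> (Rel N)\<^sup>*" by (auto simp: bruhat_Rel)
  then show "y \<in> Dset N (Suc N) m" using bruhat_down[OF _ pc_ek] by (simp add: D_top)
next
  assume "y \<in> Dset N (Suc N) m"
  then have "y \<in> Wgrp N" "pc N m y" by (auto simp: D_top)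
  then show "bruhat_le N y (ek (Suc N) m)" using bruhat_up[OF m] by (simp add: bruhat_Rel)
qed

lemma bruhat_lt:
  assumes "bruhat_le N y (ek (Suc N) m)"
  shows "y = ek (Suc N) m \<or> len N y < len N (ek (Suc N) m)"
  using assms bruhat_down[OF _ pc_ek] by (auto simp: bruhat_Rel)

lemma Qw_one:
  assumes m: "m \<le> N"
  shows "Q N (Suc N) m (ek (Suc N) m) = 1"
proof -
  have w: "ek (Suc N) m \<in> Wgrp N \<and> int (len N (ek (Suc N) m)) = Lk (Suc N) m"
    using ek_W_len[of "Suc N" N m] m by simp
  have "ek (Suc N) m \<in> Dset N (Suc N) m" using w pc_ek by (simp add: D_top)
  then show ?thesis using w by (simp add: Q_def mono_0)
qed

lemma kl_w:
  assumes N: "1 \<le> N" and m: "m \<le> N"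
  shows "kl N (ek (Suc N) m) = Q N (Suc N) m"
proof (rule kl_eq)
  let ?w = "ek (Suc N) m"
  have w: "?w \<in> Wgrp N \<and> int (len N ?w) = Lk (Suc N) m"
    using ek_W_len[of "Suc N" N m] m by simp
  show "klP N ?w (Q N (Suc N) m)"
    unfolding klP_def
  proof (intro conjI allI impI)
    fix x assume "x \<notin> Wgrp N"
    then have "x \<notin> Dset N (Suc N) m" using D_W by blast
    then show "Q N (Suc N) m x = 0" by (simp add: Q_def)
  next
    fix x show "lpoly (Q N (Suc N) m x)" using hpoly_Q by (simp add: hpoly_def)
  next
    show "hbar N (Q N (Suc N) m) = Q N (Suc N) m" using SD_all[of "Suc N" N m] m by simp
  next
    show "Q N (Suc N) m ?w = 1" by (rule Qw_one[OF m])
  next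
    fix x assume xw: "x \<noteq> ?w"
    show "vZv (Q N (Suc N) m x)"
    proof (cases "x \<in> Dset N (Suc N) m")
      case True
      then have "bruhat_le N x ?w" using bruhat_char[OF m] by simp
      then have "len N x < len N ?w" using bruhat_lt xw by blast
      then have "0 < Lk (Suc N) m - int (len N x)" using w by simp
      then show ?thesis using True by (simp add: Q_def vZv_mono)
    next
      case False then show ?thesis by (simp add: Q_def vZv_0)
    qed
  qed
qed

lemma smooth_w:
  assumes N: "1 \<le> N" and m: "m \<le> N"
  shows "smooth N (ek (Suc N) m)"
proof -
  let ?w = "ek (Suc N) m"
  have w: "?w \<in> Wgrp N \<and> int (len N ?w) = Lk (Suc N) m"
    using ek_W_len[of "Suc N" N m] m by simp
  have "Q N (Suc N) m y = (if bruhat_le N y ?w then fls_X ^ (len N ?w - len N y) else 0)" for y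
  proof (cases "bruhat_le N y ?w")
    case True
    then have D: "y \<in> Dset N (Suc N) m" using bruhat_char[OF m] by simp
    have "len N y \<le> len N ?w" using bruhat_lt[OF True] by auto
    then have "int (len N ?w - len N y) = Lk (Suc N) m - int (len N y)" using w by simp
    then show ?thesis using True D by (simp add: Q_def Xpow_mono)
  next
    case False
    then have "y \<notin> Dset N (Suc N) m" using bruhat_char[OF m] by simp
    then show ?thesis using False by (simp add: Q_def)
  qed
  then show ?thesis unfolding smooth_def using kl_w[OF N m] by (simp add: fun_eq_iff)
qed

theorem lemma11p4:
  fixes N m :: nat
  assumes "1 \<le> N" and "m \<le> N"
  shows "(m < N \<and> 1 \<le> m \<longrightarrow>
            hmult N (kl N (wI N \<circ> hsuf N m)) (kl N (sref m)) =
            hadd (kl N (wI N \<circ> hsuf N (m - 1))) (kl N (wI N \<circ> hsuf N (m + 1))))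
       \<and> (m = N \<longrightarrow> hmult N (kl N (wI N)) (kl N (sref N)) = kl N (wI N \<circ> sref N))
       \<and> (\<forall>j\<in>{1..N}. (if m < N then j \<noteq> m else j \<noteq> N) \<longrightarrow>
            hmult N (kl N (wI N \<circ> hsuf N m)) (kl N (sref j)) =
            hscale (fls_X + fls_X_inv) (kl N (wI N \<circ> hsuf N m)))
       \<and> smooth N (wI N \<circ> hsuf N m)"
proof -
  note N = assms(1) and m = assms(2)
  have klm: "\<And>m'. m' \<le> N \<Longrightarrow> kl N (wI N \<circ> hsuf N m') = Q N (Suc N) m'"
    using w_eq[OF N] kl_w[OF N] by simp
  have A: "hmult N (kl N (wI N \<circ> hsuf N m)) (kl N (sref m)) =
            hadd (kl N (wI N \<circ> hsuf N (m - 1))) (kl N (wI N \<circ> hsuf N (m + 1)))"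
    if mm: "m < N" "1 \<le> m"
  proof -
    have "hmult N (kl N (wI N \<circ> hsuf N m)) (kl N (sref m)) = Bop N m (Q N (Suc N) m)"
      using klm[OF m] kl_sref[of m N] mm hmult_Bs[of m N] by simp
    also have "\<dots> = hadd (Q N (Suc N) (m - 1)) (Q N (Suc N) (Suc m))"
      by (rule Q_rec) (use mm in auto)
    also have "\<dots> = hadd (kl N (wI N \<circ> hsuf N (m - 1))) (kl N (wI N \<circ> hsuf N (m + 1)))"
      using klm[of "m - 1"] klm[of "m + 1"] mm by simp
    finally show ?thesis .
  qed
  have B: "hmult N (kl N (wI N)) (kl N (sref N)) = kl N (wI N \<circ> sref N)" if mm: "m = N"
  proof -
    have e1: "kl N (wI N) = Q N (Suc N) N" using klm[of N] by (simp add: hsuf_N)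
    have hs: "hsuf N (N - 1) = sref N"
      using hsuf_step[of "N - 1" N] N by (simp add: hsuf_N)
    have e2: "kl N (wI N \<circ> sref N) = Q N (Suc N) (N - 1)" using klm[of "N - 1"] hs by simp
    have "hmult N (kl N (wI N)) (kl N (sref N)) = Bop N N (Q N (Suc N) N)"
      using e1 kl_sref[of N N] N hmult_Bs[of N N] by simp
    also have "\<dots> = hadd (Q N (Suc N) (N - 1)) (Q N (Suc N) (Suc N))"
      by (rule Q_rec) (use N in auto)
    also have "\<dots> = Q N (Suc N) (N - 1)" using Q_zero[of "Suc N" N] by (simp add: hadd_def)
    finally show ?thesis using e2 by simp
  qed
  have C: "hmult N (kl N (wI N \<circ> hsuf N m)) (kl N (sref j)) =
            hscale (fls_X + fls_X_inv) (kl N (wI N \<circ> hsuf N m))"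
    if j: "j \<in> {1..N}" "(if m < N then j \<noteq> m else j \<noteq> N)" for j
  proof -
    have jm: "j \<noteq> m" using j m by (auto split: if_splits)
    have j1: "1 \<le> j" "j \<le> N" using j by auto
    have "hmult N (kl N (wI N \<circ> hsuf N m)) (kl N (sref j)) = Bop N j (Q N (Suc N) m)"
      using klm[OF m] kl_sref[OF j1] hmult_Bs[OF j1] by simp
    also have "\<dots> = hscale (fls_X + fls_X_inv) (Q N (Suc N) m)"
      by (rule Q_desc[OF m j1 jm])
    finally show ?thesis using klm[OF m] by simp
  qed
  have D: "smooth N (wI N \<circ> hsuf N m)" using smooth_w[OF N m] w_eq[OF N m] by simp
  show ?thesis using A B C D by blast
qed

end
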